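(* For $n\le 7$, the independent locus $U_n$ equals all of $\mathcal{M}_{5,n}\setminus\mathcal{M}_{5,n}^3$.
   Context: Work over an algebraically closed field of characteristic not $2,3,5$. $\mathcal{M}_{5,n}$ is the moduli stack of smooth genus $5$ curves with $n$ distinct ordered marked points, and $\mathcal{M}_{5,n}^k$ is the closed locus of curves of gonality $\le k$. Points of $\mathcal{M}_{5,n}\setminus\mathcal{M}_{5,n}^3$ are curves whose canonical embedding in $\mathbb{P}^4$ is a complete intersection of three quadrics. $U_n$ is the open substack of $\mathcal{M}_{5,n}\setminus\mathcal{M}_{5,n}^3$ where the $n$ marked points, in the canonical embedding $C\subset\mathbb{P}^4$, impose independent conditions on quadrics, i.e. $H^0(\mathbb{P}^4,\mathcal{O}(2))\to\bigoplus_{i=1}^n\mathcal{O}(2)|_{p_i}$ is surjective. *)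

theory Defs
  imports "HOL-Computational_Algebra.Polynomial"
begin

text \<open>Concrete model of the canonical embedding in P^4: vectors of k^5 are
functions nat => k of which only coordinates 0..4 matter.\<close>

definition alg_closed_field :: "'a::field itself \<Rightarrow> bool" where
  "alg_closed_field _ \<longleftrightarrow> (\<forall>p::'a poly. degree p \<ge> 1 \<longrightarrow> (\<exists>x. poly p x = 0))"

definition char_not_2_3_5 :: "'a::field itself \<Rightarrow> bool" where
  "char_not_2_3_5 _ \<longleftrightarrow> (of_nat 2 :: 'a) \<noteq> 0 \<and> (of_nat 3 :: 'a) \<noteq> 0 \<and> (of_nat 5 :: 'a) \<noteq> 0"

definition quad :: "(nat \<Rightarrow> nat \<Rightarrow> 'a::field) \<Rightarrow> (nat \<Rightarrow> 'a) \<Rightarrow> 'a" where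
  "quad A x = (\<Sum>i<5. \<Sum>j<5. A i j * x i * x j)"

definition quad_grad :: "(nat \<Rightarrow> nat \<Rightarrow> 'a::field) \<Rightarrow> (nat \<Rightarrow> 'a) \<Rightarrow> nat \<Rightarrow> 'a" where
  "quad_grad A x k = (\<Sum>j<5. (A k j + A j k) * x j)"

definition nonzero5 :: "(nat \<Rightarrow> 'a::field) \<Rightarrow> bool" where
  "nonzero5 x \<longleftrightarrow> (\<exists>k<5. x k \<noteq> 0)"

definition proj_eq :: "(nat \<Rightarrow> 'a::field) \<Rightarrow> (nat \<Rightarrow> 'a) \<Rightarrow> bool" where
  "proj_eq x y \<longleftrightarrow> (\<exists>c. \<forall>k<5. x k = c * y k)"

definition cone3 :: "(nat \<Rightarrow> nat \<Rightarrow> 'a::field) \<Rightarrow> (nat \<Rightarrow> nat \<Rightarrow> 'a) \<Rightarrow> (nat \<Rightarrow> nat \<Rightarrow> 'a)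
    \<Rightarrow> (nat \<Rightarrow> 'a) set" where
  "cone3 Q1 Q2 Q3 = {x. nonzero5 x \<and> quad Q1 x = 0 \<and> quad Q2 x = 0 \<and> quad Q3 x = 0}"

text \<open>Such a
curve is exactly a canonically embedded non-trigonal smooth genus 5 curve.\<close>
definition smooth_ci_curve :: "(nat \<Rightarrow> nat \<Rightarrow> 'a::field) \<Rightarrow> (nat \<Rightarrow> nat \<Rightarrow> 'a) \<Rightarrow> (nat \<Rightarrow> nat \<Rightarrow> 'a) \<Rightarrow> bool" where
  "smooth_ci_curve Q1 Q2 Q3 \<longleftrightarrow>
     (\<forall>x\<in>cone3 Q1 Q2 Q3. \<forall>c1 c2 c3.
        (\<forall>k<5. c1 * quad_grad Q1 x k + c2 * quad_grad Q2 x k + c3 * quad_grad Q3 x k = 0)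
        \<longrightarrow> c1 = 0 \<and> c2 = 0 \<and> c3 = 0)"

text \<open>Points p 0, ..., p (n-1) impose independent conditions on quadrics:
evaluation H^0(O(2)) -> k^n is surjective.\<close>
definition indep_on_quadrics :: "nat \<Rightarrow> (nat \<Rightarrow> nat \<Rightarrow> 'a::field) \<Rightarrow> bool" where
  "indep_on_quadrics n p \<longleftrightarrow> (\<forall>c::nat \<Rightarrow> 'a. \<exists>A. \<forall>i<n. quad A (p i) = c i)"

end

theory Submission
  imports Defs
begin


definition bform :: "nat \<Rightarrow> ('a::field \<Rightarrow> 'a \<Rightarrow> 'a) \<Rightarrow> bool" where
  "bform d F \<longleftrightarrow> (\<exists>P. degree P \<le> d \<and> (\<forall>s t. t \<noteq> 0 \<longrightarrow> F s t = t^d * poly P (s/t))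
       \<and> (\<forall>s. F s 0 = coeff P d * s^d))"

lemma coeff_mult_top:
  fixes P Q :: "'a::field poly"
  assumes "degree P \<le> m" "degree Q \<le> k"
  shows "coeff (P*Q) (m+k) = coeff P m * coeff Q k"
proof -
  have "coeff (P*Q) (m+k) = (\<Sum>i\<le>m+k. coeff P i * coeff Q (m+k-i))" by (simp add: coeff_mult)
  also have "\<dots> = (\<Sum>i\<in>{m}. coeff P i * coeff Q (m+k-i))"
  proof (rule sum.mono_neutral_right)
    show "\<forall>i\<in>{..m+k} - {m}. coeff P i * coeff Q (m+k-i) = 0"
    proof
      fix i assume "i \<in> {..m+k} - {m}"
      then have "i < m \<or> i > m" by auto
      then show "coeff P i * coeff Q (m+k-i) = 0"
      proof
        assume "i < m" then have "m+k-i > k" by auto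
        then have "coeff Q (m+k-i) = 0" using assms(2) by (simp add: coeff_eq_0)
        then show ?thesis by simp
      next
        assume "i > m" then have "coeff P i = 0" using assms(1) by (simp add: coeff_eq_0)
        then show ?thesis by simp
      qed
    qed
  qed auto
  finally show ?thesis by simp
qed

lemma bform_add: "bform d F \<Longrightarrow> bform d G \<Longrightarrow> bform d (\<lambda>s t. F s t + G s t)"
  unfolding bform_def
  apply (elim exE conjE)
  subgoal for P Q
    apply (rule exI[of _ "P+Q"])
    by (auto simp: degree_add_le algebra_simps)
  done

lemma bform_diff: "bform d F \<Longrightarrow> bform d G \<Longrightarrow> bform d (\<lambda>s t. F s t - G s t)"
  unfolding bform_def
  apply (elim exE conjE)
  subgoal for P Q
    apply (rule exI[of _ "P-Q"])
    by (auto simp: degree_diff_le algebra_simps)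
  done

lemma bform_mult: "bform d F \<Longrightarrow> bform e G \<Longrightarrow> bform (d+e) (\<lambda>s t. F s t * G s t)"
  unfolding bform_def
  apply (elim exE conjE)
  subgoal for P Q
    apply (rule exI[of _ "P*Q"])
    apply (intro conjI)
    subgoal by (meson add_mono degree_mult_le order_trans)
    subgoal by (auto simp: power_add)
    subgoal by (simp add: coeff_mult_top power_add)
    done
  done

lemma bform_const: "bform 0 (\<lambda>s t. c)"
  unfolding bform_def by (rule exI[of _ "[:c:]"]) auto

lemma bform_s: "bform 1 (\<lambda>s t. s)"
  unfolding bform_def by (rule exI[of _ "[:0,1:]"]) auto

lemma bform_t: "bform 1 (\<lambda>s t. t)"
  unfolding bform_def by (rule exI[of _ "[:1:]"]) auto

lemma bform_cmult: "bform d F \<Longrightarrow> bform d (\<lambda>s t. c * F s t)"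
  using bform_mult[OF bform_const, of d F c] by simp

lemma bform_lin: "bform 1 (\<lambda>s t. a * s + b * t)"
  by (intro bform_add bform_cmult bform_s bform_t)

lemma bform_root:
  assumes "alg_closed_field TYPE('a::field)" "bform d (F::'a \<Rightarrow> 'a \<Rightarrow> 'a)" "d \<ge> 1"
  shows "\<exists>s t. (s \<noteq> 0 \<or> t \<noteq> 0) \<and> F s t = 0"
proof -
  obtain P where P: "degree P \<le> d" "\<forall>s t. t \<noteq> 0 \<longrightarrow> F s t = t^d * poly P (s/t)"
    "\<forall>s. F s 0 = coeff P d * s^d" using assms(2) unfolding bform_def by blast
  show ?thesis
  proof (cases "coeff P d = 0")
    case True
    then show ?thesis using P(3) by (intro exI[of _ 1] exI[of _ 0]) auto
  next
    case False
    then have "degree P \<ge> d" by (simp add: le_degree)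
    then have "degree P \<ge> 1" using assms(3) by simp
    then obtain x where "poly P x = 0" using assms(1) unfolding alg_closed_field_def by blast
    then show ?thesis using P(2) by (intro exI[of _ x] exI[of _ 1]) auto
  qed
qed



definition dot :: "(nat \<Rightarrow> 'a::field) \<Rightarrow> (nat \<Rightarrow> 'a) \<Rightarrow> 'a" where
  "dot g y = (\<Sum>k<5. g k * y k)"

definition bil :: "(nat \<Rightarrow> nat \<Rightarrow> 'a::field) \<Rightarrow> (nat \<Rightarrow> 'a) \<Rightarrow> (nat \<Rightarrow> 'a) \<Rightarrow> 'a" where
  "bil A x y = (\<Sum>i<5. \<Sum>j<5. A i j * x i * y j)"

definition sb :: "(nat \<Rightarrow> nat \<Rightarrow> 'a::field) \<Rightarrow> (nat \<Rightarrow> 'a) \<Rightarrow> (nat \<Rightarrow> 'a) \<Rightarrow> 'a" where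
  "sb A x y = bil A x y + bil A y x"

lemma quad_bil: "quad A x = bil A x x"
  by (simp add: quad_def bil_def)

lemma sb_sym: "sb A x y = sb A y x"
  by (simp add: sb_def)

lemma sb_self: "sb A x x = 2 * quad A x"
  by (simp add: sb_def quad_bil)

lemma bil_lin1: "bil A (\<lambda>k. u * a k + v * b k) y = u * bil A a y + v * bil A b y"
  by (simp add: bil_def algebra_simps sum.distrib sum_distrib_left)

lemma bil_lin2: "bil A y (\<lambda>k. u * a k + v * b k) = u * bil A y a + v * bil A y b"
  by (simp add: bil_def algebra_simps sum.distrib sum_distrib_left)

lemma bil_lin1_3: "bil A (\<lambda>k. u * a k + v * b k + w * c k) y = u * bil A a y + v * bil A b y + w * bil A c y"
  by (simp add: bil_def algebra_simps sum.distrib sum_distrib_left)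

lemma bil_lin2_3: "bil A y (\<lambda>k. u * a k + v * b k + w * c k) = u * bil A y a + v * bil A y b + w * bil A y c"
  by (simp add: bil_def algebra_simps sum.distrib sum_distrib_left)

lemma sb_lin1: "sb A (\<lambda>k. u * a k + v * b k) y = u * sb A a y + v * sb A b y"
  unfolding sb_def bil_lin1 bil_lin2 by (simp add: algebra_simps)

lemma sb_lin1_3: "sb A (\<lambda>k. u * a k + v * b k + w * c k) y = u * sb A a y + v * sb A b y + w * sb A c y"
  unfolding sb_def bil_lin1_3 bil_lin2_3 by (simp add: algebra_simps)

lemma quad_lin2: "quad A (\<lambda>k. u * a k + v * b k) = u^2 * quad A a + v^2 * quad A b + u * v * sb A a b"
  unfolding quad_bil sb_def bil_lin1 bil_lin2 by (simp add: algebra_simps power2_eq_square)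

lemma quad_lin3: "quad A (\<lambda>k. u * a k + v * b k + w * c k) =
   u^2 * quad A a + v^2 * quad A b + w^2 * quad A c + u * v * sb A a b + u * w * sb A a c + v * w * sb A b c"
  unfolding quad_bil sb_def bil_lin1_3 bil_lin2_3 by (simp add: algebra_simps power2_eq_square)

lemma dot_grad: "dot (quad_grad A x) y = sb A x y"
proof -
  have "dot (quad_grad A x) y = (\<Sum>k<5. \<Sum>j<5. A k j * y k * x j) + (\<Sum>k<5. \<Sum>j<5. A j k * x j * y k)"
    unfolding dot_def quad_grad_def sum.distrib[symmetric] sum_distrib_right
    by (rule sum.cong[OF refl], rule sum.cong[OF refl]) (simp add: algebra_simps)
  also have "(\<Sum>k<5. \<Sum>j<5. A j k * x j * y k) = bil A x y"
    unfolding bil_def by (subst sum.swap) simp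
  also have "(\<Sum>k<5. \<Sum>j<5. A k j * y k * x j) = bil A y x"
    unfolding bil_def by simp
  finally show ?thesis by (simp add: sb_def)
qed

lemma grad_lin2: "quad_grad A (\<lambda>k. u * a k + v * b k) i = u * quad_grad A a i + v * quad_grad A b i"
  by (simp add: quad_grad_def algebra_simps sum.distrib sum_distrib_left)

lemma grad_lin3: "quad_grad A (\<lambda>k. u * a k + v * b k + w * c k) i = u * quad_grad A a i + v * quad_grad A b i + w * quad_grad A c i"
  by (simp add: quad_grad_def algebra_simps sum.distrib sum_distrib_left)

lemma dot_lin2: "dot g (\<lambda>k. u * a k + v * b k) = u * dot g a + v * dot g b"
  by (simp add: dot_def algebra_simps sum.distrib sum_distrib_left)

lemma dot_lin3: "dot g (\<lambda>k. u * a k + v * b k + w * c k) = u * dot g a + v * dot g b + w * dot g c"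
  by (simp add: dot_def algebra_simps sum.distrib sum_distrib_left)

lemma dot_linl3: "dot (\<lambda>k. u * a k + v * b k + w * c k) y = u * dot a y + v * dot b y + w * dot c y"
  by (simp add: dot_def algebra_simps sum.distrib sum_distrib_left)

lemma dot_linl2: "dot (\<lambda>k. u * a k + v * b k) y = u * dot a y + v * dot b y"
  by (simp add: dot_def algebra_simps sum.distrib sum_distrib_left)



lemma dot_cong: "(\<And>k. k < 5 \<Longrightarrow> x k = y k) \<Longrightarrow> dot l x = dot l y"
  unfolding dot_def by (rule sum.cong) auto

lemma dot_diffl: "dot (\<lambda>k. a k - r * b k) y = dot a y - r * dot b y"
  by (simp add: dot_def algebra_simps sum_subtractf sum_distrib_left)

lemma dot_diffr: "dot l (\<lambda>k. a k - r * b k) = dot l a - r * dot l b"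
  by (simp add: dot_def algebra_simps sum_subtractf sum_distrib_left)

lemma dot_sum: "dot l (\<lambda>k. \<Sum>i\<in>I. c i * f i k) = (\<Sum>i\<in>I. c i * dot l (f i))"
  by (simp add: dot_def sum_distrib_left algebra_simps sum.swap[of _ I])

lemma dot_delta: "dot (\<lambda>k. if k = k0 then 1 else 0) y = y k0" if "k0 < 5"
proof -
  have "dot (\<lambda>k. if k = k0 then 1 else 0) y = (\<Sum>k<5. if k = k0 then y k else 0)"
    unfolding dot_def by (rule sum.cong) auto
  then show ?thesis using that by (simp add: sum.delta)
qed

lemma duality:
  fixes f :: "nat \<Rightarrow> nat \<Rightarrow> 'a::field"
  assumes "finite I"
  shows "(\<exists>l. (\<forall>i\<in>I. dot l (f i) = 0) \<and> dot l y \<noteq> 0) \<or> (\<exists>c. \<forall>k<5. y k = (\<Sum>i\<in>I. c i * f i k))"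
  using assms
proof (induction I arbitrary: y rule: finite_induct)
  case empty
  show ?case
  proof (cases "\<forall>k<5. y k = 0")
    case True then show ?thesis by auto
  next
    case False
    then obtain k0 where "k0 < 5" "y k0 \<noteq> 0" by auto
    then show ?thesis by (intro disjI1 exI[of _ "\<lambda>k. if k = k0 then 1 else 0"]) (simp add: dot_delta)
  qed
next
  case (insert a I)
  have ins: "(\<Sum>i\<in>insert a I. c i * f i k) = c a * f a k + (\<Sum>i\<in>I. c i * f i k)" for c k
    using insert(1,2) by simp
  show ?case
  proof (cases "\<exists>c. \<forall>k<5. f a k = (\<Sum>i\<in>I. c i * f i k)")
    case True
    then obtain c' where c': "\<forall>k<5. f a k = (\<Sum>i\<in>I. c' i * f i k)" by blast
    from insert(3)[of y] show ?thesis
    proof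
      assume "\<exists>l. (\<forall>i\<in>I. dot l (f i) = 0) \<and> dot l y \<noteq> 0"
      then obtain l where l: "\<forall>i\<in>I. dot l (f i) = 0" "dot l y \<noteq> 0" by blast
      have "dot l (f a) = dot l (\<lambda>k. \<Sum>i\<in>I. c' i * f i k)" using c' by (intro dot_cong) auto
      also have "\<dots> = 0" using l(1) by (simp add: dot_sum)
      finally show ?thesis using l by auto
    next
      assume "\<exists>c. \<forall>k<5. y k = (\<Sum>i\<in>I. c i * f i k)"
      then obtain c where c: "\<forall>k<5. y k = (\<Sum>i\<in>I. c i * f i k)" by blast
      have "\<forall>k<5. y k = (\<Sum>i\<in>insert a I. (c(a:=0)) i * f i k)"
        using c insert(2) unfolding ins by (auto intro!: sum.cong)
      then show ?thesis by blast
    qed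
  next
    case False
    with insert(3)[of "f a"] obtain l1 where l1: "\<forall>i\<in>I. dot l1 (f i) = 0" "dot l1 (f a) \<noteq> 0" by blast
    define t where "t = dot l1 y / dot l1 (f a)"
    define y' where "y' = (\<lambda>k. y k - t * f a k)"
    have l1y': "dot l1 y' = 0" unfolding y'_def dot_diffr t_def using l1(2) by simp
    from insert(3)[of y'] show ?thesis
    proof
      assume "\<exists>l. (\<forall>i\<in>I. dot l (f i) = 0) \<and> dot l y' \<noteq> 0"
      then obtain lt where lt: "\<forall>i\<in>I. dot lt (f i) = 0" "dot lt y' \<noteq> 0" by blast
      define r where "r = dot lt (f a) / dot l1 (f a)"
      define l where "l = (\<lambda>k. lt k - r * l1 k)"
      have "\<forall>i\<in>insert a I. dot l (f i) = 0"
        using lt(1) l1 unfolding l_def dot_diffl r_def by auto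
      moreover have "dot l y = dot l y'"
      proof -
        have "dot l (f a) = 0" unfolding l_def dot_diffl r_def using l1(2) by simp
        then show ?thesis unfolding y'_def dot_diffr by simp
      qed
      moreover have "dot l y' = dot lt y'" unfolding l_def dot_diffl l1y' by simp
      ultimately show ?thesis using lt(2) by auto
    next
      assume "\<exists>c. \<forall>k<5. y' k = (\<Sum>i\<in>I. c i * f i k)"
      then obtain c where c: "\<forall>k<5. y' k = (\<Sum>i\<in>I. c i * f i k)" by blast
      have "\<forall>k<5. y k = (\<Sum>i\<in>insert a I. (c(a:=t)) i * f i k)"
      proof (intro allI impI)
        fix k :: nat assume "k < 5"
        have "(\<Sum>i\<in>I. (c(a:=t)) i * f i k) = (\<Sum>i\<in>I. c i * f i k)"
          using insert(2) by (auto intro!: sum.cong)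
        moreover have "y k - t * f a k = (\<Sum>i\<in>I. c i * f i k)" using c \<open>k < 5\<close> unfolding y'_def by simp
        ultimately show "y k = (\<Sum>i\<in>insert a I. (c(a:=t)) i * f i k)"
          unfolding ins by (simp add: algebra_simps)
      qed
      then show ?thesis by blast
    qed
  qed
qed



definition det3 :: "'a::field \<Rightarrow> 'a \<Rightarrow> 'a \<Rightarrow> 'a \<Rightarrow> 'a \<Rightarrow> 'a \<Rightarrow> 'a \<Rightarrow> 'a \<Rightarrow> 'a \<Rightarrow> 'a" where
  "det3 m11 m12 m13 m21 m22 m23 m31 m32 m33 =
     m11 * (m22 * m33 - m23 * m32) - m12 * (m21 * m33 - m23 * m31) + m13 * (m21 * m32 - m22 * m31)"

lemma left_null3:
  fixes m11 m12 m13 m21 m22 m23 m31 m32 m33 :: "'a::field"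
  assumes "det3 m11 m12 m13 m21 m22 m23 m31 m32 m33 = 0"
  shows "\<exists>c1 c2 c3. (c1 \<noteq> 0 \<or> c2 \<noteq> 0 \<or> c3 \<noteq> 0) \<and>
     c1 * m11 + c2 * m21 + c3 * m31 = 0 \<and> c1 * m12 + c2 * m22 + c3 * m32 = 0 \<and> c1 * m13 + c2 * m23 + c3 * m33 = 0"
    (is "\<exists>c1 c2 c3. _ \<and> ?P c1 c2 c3")
proof -
  have d: "m11 * (m22 * m33 - m23 * m32) - m12 * (m21 * m33 - m23 * m31) + m13 * (m21 * m32 - m22 * m31) = 0"
    using assms by (simp add: det3_def)
  have col1: "?P (m22*m33 - m23*m32) (m13*m32 - m12*m33) (m12*m23 - m13*m22)"
  proof (intro conjI)
    show "(m22*m33 - m23*m32) * m11 + (m13*m32 - m12*m33) * m21 + (m12*m23 - m13*m22) * m31 = 0"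
      using d by algebra
  qed algebra+
  have col2: "?P (m23*m31 - m21*m33) (m11*m33 - m13*m31) (m13*m21 - m11*m23)"
  proof (intro conjI)
    show "(m23*m31 - m21*m33) * m12 + (m11*m33 - m13*m31) * m22 + (m13*m21 - m11*m23) * m32 = 0"
      using d by algebra
  qed algebra+
  have col3: "?P (m21*m32 - m22*m31) (m12*m31 - m11*m32) (m11*m22 - m12*m21)"
  proof (intro conjI)
    show "(m21*m32 - m22*m31) * m13 + (m12*m31 - m11*m32) * m23 + (m11*m22 - m12*m21) * m33 = 0"
      using d by algebra
  qed algebra+
  show ?thesis
  proof (cases "m22*m33 - m23*m32 \<noteq> 0 \<or> m13*m32 - m12*m33 \<noteq> 0 \<or> m12*m23 - m13*m22 \<noteq> 0")
    case True then show ?thesis using col1 by blast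
  next
    case F1: False
    show ?thesis
    proof (cases "m23*m31 - m21*m33 \<noteq> 0 \<or> m11*m33 - m13*m31 \<noteq> 0 \<or> m13*m21 - m11*m23 \<noteq> 0")
      case True then show ?thesis using col2 by blast
    next
      case F2: False
      show ?thesis
      proof (cases "m21*m32 - m22*m31 \<noteq> 0 \<or> m12*m31 - m11*m32 \<noteq> 0 \<or> m11*m22 - m12*m21 \<noteq> 0")
        case True then show ?thesis using col3 by blast
      next
        case F3: False
        have z1: "m11*m22 = m12*m21" "m11*m23 = m13*m21" "m12*m23 = m13*m22"
          using F1 F2 F3 by auto
        show ?thesis
        proof (cases "m11 = 0 \<and> m12 = 0 \<and> m13 = 0")
          case True then show ?thesis by (intro exI[of _ 1] exI[of _ 0]) simp
        next
          case False
          then consider "m11 \<noteq> 0" | "m12 \<noteq> 0" | "m13 \<noteq> 0" by blast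
          then show ?thesis
          proof cases
            case 1 then show ?thesis using z1
              by (intro exI[of _ m21] exI[of _ "-m11"] exI[of _ 0]) (auto simp: algebra_simps)
          next
            case 2 then show ?thesis using z1
              by (intro exI[of _ m22] exI[of _ "-m12"] exI[of _ 0]) (auto simp: algebra_simps)
          next
            case 3 then show ?thesis using z1
              by (intro exI[of _ m23] exI[of _ "-m13"] exI[of _ 0]) (auto simp: algebra_simps)
          qed
        qed
      qed
    qed
  qed
qed

lemma quad_cong: "(\<And>k. k < 5 \<Longrightarrow> x k = y k) \<Longrightarrow> quad A x = quad A y"
  unfolding quad_def by (intro sum.cong refl) auto

lemma grad_cong: "(\<And>k. k < 5 \<Longrightarrow> x k = y k) \<Longrightarrow> quad_grad A x i = quad_grad A y i"
  unfolding quad_grad_def by (intro sum.cong refl) auto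

lemma minor2_exists:
  fixes a b :: "nat \<Rightarrow> 'a::field"
  assumes "nonzero5 a" "\<not> proj_eq b a"
  shows "\<exists>k1 k2. k1 < 5 \<and> k2 < 5 \<and> a k1 * b k2 - a k2 * b k1 \<noteq> 0"
proof (rule ccontr)
  assume H: "\<not> ?thesis"
  obtain j where j: "j < 5" "a j \<noteq> 0" using assms(1) unfolding nonzero5_def by auto
  have "\<forall>k<5. b k = (b j / a j) * a k"
  proof (intro allI impI)
    fix k :: nat assume "k < 5"
    then have "a j * b k - a k * b j = 0" using H j by auto
    then show "b k = (b j / a j) * a k" using j(2) by (simp add: field_simps)
  qed
  then show False using assms(2) unfolding proj_eq_def by blast
qed

lemma compl2:
  assumes "k1 < 5" "k2 < (5::nat)" "k1 \<noteq> k2"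
  shows "\<exists>r1 r2 r3. distinct [k1,k2,r1,r2,r3] \<and> r1 < 5 \<and> r2 < 5 \<and> r3 < 5"
proof -
  define L where "L = filter (\<lambda>i. i \<noteq> k1 \<and> i \<noteq> k2) [0..<5]"
  have sL: "set L = {..<5} - {k1,k2}" unfolding L_def by auto
  have dL: "distinct L" unfolding L_def by simp
  have "length L = card ({..<5::nat} - {k1,k2})" using sL dL by (metis distinct_card)
  also have "\<dots> = 3" using assms by (simp add: card_Diff_subset)
  finally have len: "length L = 3" .
  then obtain r1 r2 r3 where L: "L = [r1,r2,r3]"
    by (metis (no_types) length_0_conv length_Suc_conv numeral_3_eq_3)
  have "set [r1,r2,r3] \<inter> {k1,k2} = {}" using sL L by auto
  moreover have "set [r1,r2,r3] \<subseteq> {..<5}" using sL L by auto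
  moreover have "distinct [r1,r2,r3]" using dL L by simp
  ultimately show ?thesis using assms(3) by (intro exI[of _ r1] exI[of _ r2] exI[of _ r3]) simp
qed

lemma compl3:
  assumes "k1 < 5" "k2 < (5::nat)" "k3 < 5" "distinct [k1,k2,k3]"
  shows "\<exists>r1 r2. distinct [k1,k2,k3,r1,r2] \<and> r1 < 5 \<and> r2 < 5"
proof -
  define L where "L = filter (\<lambda>i. i \<noteq> k1 \<and> i \<noteq> k2 \<and> i \<noteq> k3) [0..<5]"
  have sL: "set L = {..<5} - {k1,k2,k3}" unfolding L_def by auto
  have dL: "distinct L" unfolding L_def by simp
  have "length L = card ({..<5::nat} - {k1,k2,k3})" using sL dL by (metis distinct_card)
  also have "\<dots> = 2" using assms by (simp add: card_Diff_subset)
  finally have len: "length L = 2" .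
  then obtain r1 r2 where L: "L = [r1,r2]"
    by (metis (no_types) length_0_conv length_Suc_conv numeral_2_eq_2)
  have "set [r1,r2] \<inter> {k1,k2,k3} = {}" using sL L by auto
  moreover have "set [r1,r2] \<subseteq> {..<5}" using sL L by auto
  moreover have "distinct [r1,r2]" using dL L by simp
  ultimately show ?thesis using assms(4) by (intro exI[of _ r1] exI[of _ r2]) simp
qed

lemma sum5_2:
  assumes "distinct [k1,k2,r1,r2,r3]" "k1 < 5" "k2 < 5" "r1 < 5" "r2 < 5" "r3 < (5::nat)"
  shows "(\<Sum>k<5. f k) = f k1 + f k2 + f r1 + f r2 + f r3"
proof -
  have "{..<5::nat} = {k1,k2,r1,r2,r3}"
  proof -
    have "{k1,k2,r1,r2,r3} \<subseteq> {..<5}" using assms by auto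
    moreover have "card {k1,k2,r1,r2,r3} = 5" using assms(1) by simp
    ultimately show ?thesis by (metis card_lessThan card_subset_eq finite_lessThan)
  qed
  then show ?thesis using assms(1) by (simp add: algebra_simps)
qed

lemma sum5_3:
  assumes "distinct [k1,k2,k3,r1,r2]" "k1 < 5" "k2 < 5" "k3 < 5" "r1 < 5" "r2 < (5::nat)"
  shows "(\<Sum>k<5. f k) = f k1 + f k2 + f k3 + f r1 + f r2"
proof -
  have "{..<5::nat} = {k1,k2,k3,r1,r2}"
  proof -
    have "{k1,k2,k3,r1,r2} \<subseteq> {..<5}" using assms by auto
    moreover have "card {k1,k2,k3,r1,r2} = 5" using assms(1) by simp
    ultimately show ?thesis by (metis card_lessThan card_subset_eq finite_lessThan)
  qed
  then show ?thesis using assms(1) by (simp add: algebra_simps)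
qed



lemma set5:
  assumes "distinct [k1,k2,r1,r2,r3]" "k1 < 5" "k2 < 5" "r1 < 5" "r2 < 5" "r3 < (5::nat)" "k < 5"
  shows "k = k1 \<or> k = k2 \<or> k = r1 \<or> k = r2 \<or> k = r3"
proof -
  have "{k1,k2,r1,r2,r3} \<subseteq> {..<5}" using assms by auto
  moreover have "card {k1,k2,r1,r2,r3} = 5" using assms(1) by simp
  ultimately have "{..<5::nat} = {k1,k2,r1,r2,r3}" by (metis card_lessThan card_subset_eq finite_lessThan)
  then show ?thesis using assms(7) by blast
qed

lemma bform_sc: "bform 1 (\<lambda>s t. s * c)"
  using bform_mult[OF bform_s bform_const, of c] by simp

lemma bform_tc: "bform 1 (\<lambda>s t. t * c)"
  using bform_mult[OF bform_t bform_const, of c] by simp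

lemma bform_det3:
  assumes "bform 1 m11" "bform 1 m12" "bform 1 m13" "bform 1 m21" "bform 1 m22" "bform 1 m23"
    "bform 1 m31" "bform 1 m32" "bform 1 m33"
  shows "bform 3 (\<lambda>s t. det3 (m11 s t) (m12 s t) (m13 s t) (m21 s t) (m22 s t) (m23 s t) (m31 s t) (m32 s t) (m33 s t))"
proof -
  have M: "bform 2 (\<lambda>s t. f s t * g s t - h s t * k s t)" if "bform 1 f" "bform 1 g" "bform 1 h" "bform 1 k" for f g h k
    using bform_diff[OF bform_mult[OF that(1,2)] bform_mult[OF that(3,4)]] by (simp add: numeral_2_eq_2)
  have T: "bform 3 (\<lambda>s t. f s t * g s t)" if "bform 1 f" "bform 2 g" for f g
    using bform_mult[OF that] by (simp add: numeral_3_eq_3 numeral_2_eq_2)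
  have h1: "bform 3 (\<lambda>s t. m11 s t * (m22 s t * m33 s t - m23 s t * m32 s t))"
    by (rule T[OF assms(1) M[OF assms(5,9,6,8)]])
  have h2: "bform 3 (\<lambda>s t. m12 s t * (m21 s t * m33 s t - m23 s t * m31 s t))"
    by (rule T[OF assms(2) M[OF assms(4,9,6,7)]])
  have h3: "bform 3 (\<lambda>s t. m13 s t * (m21 s t * m32 s t - m22 s t * m31 s t))"
    by (rule T[OF assms(3) M[OF assms(4,8,5,7)]])
  show ?thesis unfolding det3_def using bform_add[OF bform_diff[OF h1 h2] h3] by simp
qed

lemma bform_lin2: "bform 1 (\<lambda>s t. s * u + t * v)"
  by (rule bform_add[OF bform_sc bform_tc])

locale curve5 =
  fixes Q1 Q2 Q3 :: "nat \<Rightarrow> nat \<Rightarrow> 'a::field"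
  assumes ac: "alg_closed_field TYPE('a)" and sm: "smooth_ci_curve Q1 Q2 Q3"
begin

abbreviation "X \<equiv> cone3 Q1 Q2 Q3"

lemma memX: "x \<in> X \<longleftrightarrow> nonzero5 x \<and> quad Q1 x = 0 \<and> quad Q2 x = 0 \<and> quad Q3 x = 0"
  by (simp add: cone3_def)

lemma smooth_contra:
  assumes "x \<in> X" "c1 \<noteq> 0 \<or> c2 \<noteq> 0 \<or> c3 \<noteq> 0"
    "\<And>k. k < 5 \<Longrightarrow> c1 * quad_grad Q1 x k + c2 * quad_grad Q2 x k + c3 * quad_grad Q3 x k = 0"
  shows False
  using sm assms unfolding smooth_ci_curve_def by blast

lemma no_line:
  assumes a: "a \<in> X" and b: "b \<in> X" and p: "p \<in> X"
    and pa: "\<not> proj_eq p a" and pb: "\<not> proj_eq p b" and ba: "\<not> proj_eq b a"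
    and comb: "\<forall>k<5. p k = \<alpha> * a k + \<beta> * b k"
  shows False
proof -
  have "\<alpha> \<noteq> 0"
  proof
    assume "\<alpha> = 0" then have "\<forall>k<5. p k = \<beta> * b k" using comb by simp
    then show False using pb unfolding proj_eq_def by blast
  qed
  have "\<beta> \<noteq> 0"
  proof
    assume "\<beta> = 0" then have "\<forall>k<5. p k = \<alpha> * a k" using comb by simp
    then show False using pa unfolding proj_eq_def by blast
  qed
  have sb0: "sb Q a b = 0" if "quad Q a = 0" "quad Q b = 0" "quad Q p = 0" for Q
  proof -
    have "quad Q p = quad Q (\<lambda>k. \<alpha> * a k + \<beta> * b k)" using comb by (intro quad_cong) auto
    also have "\<dots> = \<alpha> * \<beta> * sb Q a b" using that by (simp add: quad_lin2)
    finally show ?thesis using that \<open>\<alpha> \<noteq> 0\<close> \<open>\<beta> \<noteq> 0\<close> by simp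
  qed
  have sb1: "sb Q1 a b = 0" "sb Q2 a b = 0" "sb Q3 a b = 0"
    using a b p by (auto simp: memX intro!: sb0)
  obtain k1 k2 where kk: "k1 < 5" "k2 < 5" and m: "a k1 * b k2 - a k2 * b k1 \<noteq> 0"
    using minor2_exists[of a b] a ba by (auto simp: memX)
  have "k1 \<noteq> k2" using m by auto
  then obtain r1 r2 r3 where rr: "distinct [k1,k2,r1,r2,r3]" "r1 < 5" "r2 < 5" "r3 < 5"
    using compl2 kk by blast
  define g where "g = (\<lambda>Q s t r. s * quad_grad Q a r + t * quad_grad Q b r)"
  define F where "F = (\<lambda>s t. det3 (g Q1 s t r1) (g Q1 s t r2) (g Q1 s t r3)
     (g Q2 s t r1) (g Q2 s t r2) (g Q2 s t r3) (g Q3 s t r1) (g Q3 s t r2) (g Q3 s t r3))"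
  have "bform 3 F"
    unfolding F_def g_def by (rule bform_det3; rule bform_lin2)
  then have "\<exists>s t. (s \<noteq> 0 \<or> t \<noteq> 0) \<and> F s t = 0" by (rule bform_root[OF ac]) simp
  then obtain s t where st: "s \<noteq> 0 \<or> t \<noteq> 0" "F s t = 0" by blast
  define x where "x = (\<lambda>k. s * a k + t * b k)"
  have "nonzero5 x"
  proof (rule ccontr)
    assume "\<not> nonzero5 x"
    then have "x k1 = 0" "x k2 = 0" using kk unfolding nonzero5_def by auto
    moreover have "s * (a k1 * b k2 - a k2 * b k1) = x k1 * b k2 - x k2 * b k1"
      unfolding x_def by (simp add: algebra_simps)
    moreover have "t * (a k1 * b k2 - a k2 * b k1) = x k2 * a k1 - x k1 * a k2"
      unfolding x_def by (simp add: algebra_simps)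
    ultimately have "s * (a k1 * b k2 - a k2 * b k1) = 0" "t * (a k1 * b k2 - a k2 * b k1) = 0" by simp_all
    then show False using m st(1) by simp
  qed
  have qx: "quad Q x = 0" if "quad Q a = 0" "quad Q b = 0" "sb Q a b = 0" for Q
    unfolding x_def quad_lin2 using that by simp
  have xX: "x \<in> X" using \<open>nonzero5 x\<close> a b sb1 by (simp add: memX qx)
  have gx: "quad_grad Q x r = g Q s t r" for Q r unfolding x_def g_def by (rule grad_lin2)
  obtain c1 c2 c3 where c: "c1 \<noteq> 0 \<or> c2 \<noteq> 0 \<or> c3 \<noteq> 0"
    "c1 * g Q1 s t r1 + c2 * g Q2 s t r1 + c3 * g Q3 s t r1 = 0"
    "c1 * g Q1 s t r2 + c2 * g Q2 s t r2 + c3 * g Q3 s t r2 = 0"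
    "c1 * g Q1 s t r3 + c2 * g Q2 s t r3 + c3 * g Q3 s t r3 = 0"
    using left_null3[of "g Q1 s t r1" "g Q1 s t r2" "g Q1 s t r3" "g Q2 s t r1" "g Q2 s t r2" "g Q2 s t r3"
        "g Q3 s t r1" "g Q3 s t r2" "g Q3 s t r3"] st(2) unfolding F_def by blast
  define G where "G = (\<lambda>k. c1 * quad_grad Q1 x k + c2 * quad_grad Q2 x k + c3 * quad_grad Q3 x k)"
  have Gr: "G r1 = 0" "G r2 = 0" "G r3 = 0" using c unfolding G_def gx by auto
  have sbx: "sb Q x y = 0" if "y = a \<or> y = b" "quad Q a = 0" "quad Q b = 0" "sb Q a b = 0" for Q y
    using that unfolding x_def sb_lin1 by (auto simp: sb_self sb_sym[of Q b a])
  have dGa: "dot G a = 0" and dGb: "dot G b = 0"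
    unfolding G_def dot_linl3 dot_grad using a b sb1 by (auto simp: memX sbx)
  have "dot G a = G k1 * a k1 + G k2 * a k2 + G r1 * a r1 + G r2 * a r2 + G r3 * a r3"
    unfolding dot_def by (rule sum5_2[OF rr(1) kk rr(2-4)])
  then have e1: "G k1 * a k1 + G k2 * a k2 = 0" using dGa Gr by simp
  have "dot G b = G k1 * b k1 + G k2 * b k2 + G r1 * b r1 + G r2 * b r2 + G r3 * b r3"
    unfolding dot_def by (rule sum5_2[OF rr(1) kk rr(2-4)])
  then have e2: "G k1 * b k1 + G k2 * b k2 = 0" using dGb Gr by simp
  have "G k1 * (a k1 * b k2 - a k2 * b k1) = (G k1 * a k1 + G k2 * a k2) * b k2 - (G k1 * b k1 + G k2 * b k2) * a k2"
    by (simp add: algebra_simps)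
  then have "G k1 = 0" using e1 e2 m by simp
  have "G k2 * (a k1 * b k2 - a k2 * b k1) = (G k1 * b k1 + G k2 * b k2) * a k1 - (G k1 * a k1 + G k2 * a k2) * b k1"
    by (simp add: algebra_simps)
  then have "G k2 = 0" using e1 e2 m by simp
  have "G k = 0" if "k < 5" for k
    using set5[OF rr(1) kk rr(2-4) that] Gr \<open>G k1 = 0\<close> \<open>G k2 = 0\<close> by auto
  then show False using smooth_contra[OF xX c(1)] unfolding G_def by blast
qed

end


lemma cramer3:
  fixes m11 m12 m13 m21 m22 m23 m31 m32 m33 x1 x2 x3 :: "'a::field"
  assumes "det3 m11 m12 m13 m21 m22 m23 m31 m32 m33 \<noteq> 0"
    and e1: "x1 * m11 + x2 * m12 + x3 * m13 = 0"
    and e2: "x1 * m21 + x2 * m22 + x3 * m23 = 0"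
    and e3: "x1 * m31 + x2 * m32 + x3 * m33 = 0"
  shows "x1 = 0 \<and> x2 = 0 \<and> x3 = 0"
proof -
  let ?d = "det3 m11 m12 m13 m21 m22 m23 m31 m32 m33"
  have "x1 * ?d = (x1 * m11 + x2 * m12 + x3 * m13) * (m22*m33 - m23*m32)
     - (x1 * m21 + x2 * m22 + x3 * m23) * (m12*m33 - m13*m32) + (x1 * m31 + x2 * m32 + x3 * m33) * (m12*m23 - m13*m22)"
    unfolding det3_def by algebra
  then have 1: "x1 * ?d = 0" using e1 e2 e3 by simp
  have "x2 * ?d = - (x1 * m11 + x2 * m12 + x3 * m13) * (m21*m33 - m23*m31)
     + (x1 * m21 + x2 * m22 + x3 * m23) * (m11*m33 - m13*m31) - (x1 * m31 + x2 * m32 + x3 * m33) * (m11*m23 - m13*m21)"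
    unfolding det3_def by algebra
  then have 2: "x2 * ?d = 0" using e1 e2 e3 by simp
  have "x3 * ?d = (x1 * m11 + x2 * m12 + x3 * m13) * (m21*m32 - m22*m31)
     - (x1 * m21 + x2 * m22 + x3 * m23) * (m11*m32 - m12*m31) + (x1 * m31 + x2 * m32 + x3 * m33) * (m11*m22 - m12*m21)"
    unfolding det3_def by algebra
  then have 3: "x3 * ?d = 0" using e1 e2 e3 by simp
  show ?thesis using 1 2 3 assms(1) by simp
qed

lemma det3_transp: "det3 m11 m12 m13 m21 m22 m23 m31 m32 m33 = det3 m11 m21 m31 m12 m22 m32 m13 m23 m33"
  unfolding det3_def by algebra

lemma cramer3T:
  fixes m11 m12 m13 m21 m22 m23 m31 m32 m33 x1 x2 x3 :: "'a::field"
  assumes "det3 m11 m12 m13 m21 m22 m23 m31 m32 m33 \<noteq> 0"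
    and "x1 * m11 + x2 * m21 + x3 * m31 = 0"
    and "x1 * m12 + x2 * m22 + x3 * m32 = 0"
    and "x1 * m13 + x2 * m23 + x3 * m33 = 0"
  shows "x1 = 0 \<and> x2 = 0 \<and> x3 = 0"
  using cramer3[of m11 m21 m31 m12 m22 m32 m13 m23 m33 x1 x2 x3] assms det3_transp by metis

lemma null2:
  fixes a1 a2 b1 b2 :: "'a::field"
  assumes "a1 * b2 - a2 * b1 = 0"
  shows "\<exists>e1 e2. (e1 \<noteq> 0 \<or> e2 \<noteq> 0) \<and> e1 * a1 + e2 * b1 = 0 \<and> e1 * a2 + e2 * b2 = 0"
proof (cases "a1 = 0 \<and> b1 = 0")
  case True
  show ?thesis
  proof (cases "a2 = 0 \<and> b2 = 0")
    case True then show ?thesis using \<open>a1 = 0 \<and> b1 = 0\<close> by (intro exI[of _ 1] exI[of _ 0]) auto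
  next
    case False then show ?thesis using \<open>a1 = 0 \<and> b1 = 0\<close>
      by (intro exI[of _ b2] exI[of _ "-a2"]) (auto simp: algebra_simps)
  qed
next
  case False
  then show ?thesis using assms
    by (intro exI[of _ b1] exI[of _ "-a1"]) (auto simp: algebra_simps)
qed

lemma two_perp:
  fixes l1 l2 l3 :: "'a::field"
  shows "\<exists>a1 a2 a3 b1 b2 b3. a1 * l1 + a2 * l2 + a3 * l3 = 0 \<and> b1 * l1 + b2 * l2 + b3 * l3 = 0 \<and>
     (\<forall>e1 e2. e1 * a1 + e2 * b1 = 0 \<and> e1 * a2 + e2 * b2 = 0 \<and> e1 * a3 + e2 * b3 = 0 \<longrightarrow> e1 = 0 \<and> e2 = 0)"
proof (cases "l1 = 0")
  case False
  show ?thesis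
    by (rule exI[of _ l2], rule exI[of _ "-l1"], rule exI[of _ 0], rule exI[of _ l3], rule exI[of _ 0], rule exI[of _ "-l1"])
      (use False in \<open>auto simp: algebra_simps\<close>)
next
  case True
  show ?thesis
  proof (cases "l2 = 0")
    case False
    show ?thesis
      by (rule exI[of _ 1], rule exI[of _ 0], rule exI[of _ 0], rule exI[of _ 0], rule exI[of _ l3], rule exI[of _ "-l2"])
        (use False True in \<open>auto simp: algebra_simps\<close>)
  next
    case F: True
    show ?thesis
      by (rule exI[of _ 1], rule exI[of _ 0], rule exI[of _ 0], rule exI[of _ 0], rule exI[of _ 1], rule exI[of _ 0])
        (use F True in \<open>auto simp: algebra_simps\<close>)
  qed
qed

lemma cross_line:
  fixes r1 r2 r3 s1 s2 s3 v1 v2 v3 :: "'a::field"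
  assumes "r1 * v1 + r2 * v2 + r3 * v3 = 0" "s1 * v1 + s2 * v2 + s3 * v3 = 0"
    and "r2 * s3 - r3 * s2 \<noteq> 0"
  shows "v2 = (v1 / (r2 * s3 - r3 * s2)) * (r3 * s1 - r1 * s3) \<and> v3 = (v1 / (r2 * s3 - r3 * s2)) * (r1 * s2 - r2 * s1)"
proof -
  let ?w1 = "r2 * s3 - r3 * s2"
  have "v2 * ?w1 - v1 * (r3 * s1 - r1 * s3) = s3 * (r1 * v1 + r2 * v2 + r3 * v3) - r3 * (s1 * v1 + s2 * v2 + s3 * v3)"
    by algebra
  then have a: "v2 * ?w1 = v1 * (r3 * s1 - r1 * s3)" using assms(1,2) by simp
  have "v3 * ?w1 - v1 * (r1 * s2 - r2 * s1) = r2 * (s1 * v1 + s2 * v2 + s3 * v3) - s2 * (r1 * v1 + r2 * v2 + r3 * v3)"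
    by algebra
  then have b: "v3 * ?w1 = v1 * (r1 * s2 - r2 * s1)" using assms(1,2) by simp
  show ?thesis using a b assms(3) by (auto simp: field_simps)
qed

lemma conic_param:
  fixes X Y Z s t :: "'a::field"
  defines "u \<equiv> Y * Z * (s * t) - Y * X * (t * t)"
    and "v \<equiv> - (Y * Y) * (s * t)"
    and "w \<equiv> Y * X * (s * t) - Y * Z * (s * s)"
  shows "X * (u * v) + Y * (u * w) + Z * (v * w) = 0"
  unfolding u_def v_def w_def by algebra

lemma conic_param_nz:
  fixes X Y Z s t :: "'a::field"
  assumes "X \<noteq> 0" "Y \<noteq> 0" "Z \<noteq> 0" "s \<noteq> 0 \<or> t \<noteq> 0"
    and "Y * Z * (s * t) - Y * X * (t * t) = 0" "- (Y * Y) * (s * t) = 0" "Y * X * (s * t) - Y * Z * (s * s) = 0"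
  shows False
proof -
  from assms(6) assms(2) have "s = 0 \<or> t = 0" by simp
  then show False using assms by auto
qed

lemma bform_quadform: "bform 2 (\<lambda>s t. c1 * (s * s) + c2 * (s * t) + c3 * (t * t))"
proof -
  have ss: "bform 2 (\<lambda>s t. s * s)" using bform_mult[OF bform_s bform_s] by (simp add: numeral_2_eq_2)
  have st: "bform 2 (\<lambda>s t. s * t)" using bform_mult[OF bform_s bform_t] by (simp add: numeral_2_eq_2)
  have tt: "bform 2 (\<lambda>s t. t * t)" using bform_mult[OF bform_t bform_t] by (simp add: numeral_2_eq_2)
  show ?thesis by (intro bform_add bform_cmult ss st tt)
qed



definition ind2 :: "(nat \<Rightarrow> 'a::field) \<Rightarrow> (nat \<Rightarrow> 'a) \<Rightarrow> bool" where
  "ind2 x y \<longleftrightarrow> \<not> proj_eq x y \<and> \<not> proj_eq y x"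

lemma ind2_sym: "ind2 x y \<Longrightarrow> ind2 y x"
  by (auto simp: ind2_def)

context curve5
begin

lemma no_line':
  assumes "x \<in> X" "y \<in> X" "z \<in> X" "ind2 x y" "ind2 x z" "ind2 y z"
    and "\<forall>k<5. z k = \<alpha> * x k + \<beta> * y k"
  shows False
  using no_line[of x y z \<alpha> \<beta>] assms by (auto simp: ind2_def)

lemma minor3_exists:
  assumes X: "A \<in> X" "B \<in> X" "C \<in> X" and ind: "ind2 A B" "ind2 A C" "ind2 B C"
  shows "\<exists>k1 k2 k3. k1 < 5 \<and> k2 < 5 \<and> k3 < 5 \<and> distinct [k1,k2,k3] \<and>
     det3 (A k1) (A k2) (A k3) (B k1) (B k2) (B k3) (C k1) (C k2) (C k3) \<noteq> 0"
proof -
  obtain k1 k2 where kk: "k1 < 5" "k2 < 5" and m: "A k1 * B k2 - A k2 * B k1 \<noteq> 0"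
    using minor2_exists[of A B] X ind by (auto simp: memX ind2_def)
  let ?m = "A k1 * B k2 - A k2 * B k1"
  define c where "c = (\<lambda>k. ?m * C k - (C k1 * B k2 - C k2 * B k1) * A k - (A k1 * C k2 - A k2 * C k1) * B k)"
  have ck1: "c k1 = 0" unfolding c_def by algebra
  have ck2: "c k2 = 0" unfolding c_def by algebra
  have "\<exists>k3<5. c k3 \<noteq> 0"
  proof (rule ccontr)
    assume "\<not> ?thesis"
    have "\<forall>k<5. C k = ((C k1 * B k2 - C k2 * B k1) / ?m) * A k + ((A k1 * C k2 - A k2 * C k1) / ?m) * B k"
    proof (intro allI impI)
      fix k :: nat assume "k < 5"
      then have "c k = 0" using \<open>\<not> (\<exists>k3<5. c k3 \<noteq> 0)\<close> by auto
      then have e: "?m * C k = (C k1 * B k2 - C k2 * B k1) * A k + (A k1 * C k2 - A k2 * C k1) * B k"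
        unfolding c_def by (simp add: algebra_simps)
      have "C k = (?m * C k) / ?m" using m by simp
      also have "\<dots> = ((C k1 * B k2 - C k2 * B k1) * A k + (A k1 * C k2 - A k2 * C k1) * B k) / ?m"
        using e by simp
      also have "\<dots> = ((C k1 * B k2 - C k2 * B k1) / ?m) * A k + ((A k1 * C k2 - A k2 * C k1) / ?m) * B k"
        by (simp add: add_divide_distrib)
      finally show "C k = ((C k1 * B k2 - C k2 * B k1) / ?m) * A k + ((A k1 * C k2 - A k2 * C k1) / ?m) * B k" .
    qed
    then show False using no_line'[of A B C] X ind by blast
  qed
  then obtain k3 where k3: "k3 < 5" "c k3 \<noteq> 0" by blast
  have "det3 (A k1) (A k2) (A k3) (B k1) (B k2) (B k3) (C k1) (C k2) (C k3) = c k3"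
    unfolding det3_def c_def by algebra
  moreover have "k1 \<noteq> k2" using m by auto
  moreover have "k3 \<noteq> k1" "k3 \<noteq> k2" using k3 ck1 ck2 by auto
  ultimately show ?thesis using kk k3 by (intro exI[of _ k1] exI[of _ k2] exI[of _ k3]) auto
qed

end


lemma recomb:
  fixes k d1 d2 d3 p1 p2 p3 a b c :: "'a::field"
  assumes "k * p1 = d1" "k * p2 = d2"
  shows "d1 * a + d2 * b + d3 * c = k * (p1 * a + p2 * b + p3 * c) + (d3 - k * p3) * c"
  using assms by (auto simp: algebra_simps)

lemma bform_entry: "bform 2 U \<Longrightarrow> bform 2 V \<Longrightarrow> bform 2 W \<Longrightarrow>
   bform 2 (\<lambda>s t. U s t * \<alpha> + V s t * \<beta> + W s t * \<gamma>)"
proof -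
  assume h: "bform 2 U" "bform 2 V" "bform 2 W"
  have "bform (2+0) (\<lambda>s t. U s t * \<alpha>)" by (rule bform_mult[OF h(1) bform_const])
  moreover have "bform (2+0) (\<lambda>s t. V s t * \<beta>)" by (rule bform_mult[OF h(2) bform_const])
  moreover have "bform (2+0) (\<lambda>s t. W s t * \<gamma>)" by (rule bform_mult[OF h(3) bform_const])
  ultimately show ?thesis using bform_add[OF bform_add] by simp
qed

lemma bform_det2: "bform 2 f \<Longrightarrow> bform 2 g \<Longrightarrow> bform 2 h \<Longrightarrow> bform 2 k \<Longrightarrow>
   bform 4 (\<lambda>s t. f s t * g s t - h s t * k s t)"
  using bform_diff[OF bform_mult bform_mult, of 2 f 2 g h k] by simp

context curve5
begin

definition GG :: "'a \<Rightarrow> 'a \<Rightarrow> 'a \<Rightarrow> (nat \<Rightarrow> 'a) \<Rightarrow> nat \<Rightarrow> 'a" where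
  "GG a1 a2 a3 y r = a1 * quad_grad Q1 y r + a2 * quad_grad Q2 y r + a3 * quad_grad Q3 y r"

lemma GG_lin3: "GG a1 a2 a3 (\<lambda>k. u * A k + v * B k + w * C k) r = u * GG a1 a2 a3 A r + v * GG a1 a2 a3 B r + w * GG a1 a2 a3 C r"
  unfolding GG_def grad_lin3 by (simp add: algebra_simps)

lemma dot_GG: "dot (GG a1 a2 a3 y) z = a1 * sb Q1 y z + a2 * sb Q2 y z + a3 * sb Q3 y z"
proof -
  have "GG a1 a2 a3 y = (\<lambda>k. a1 * quad_grad Q1 y k + a2 * quad_grad Q2 y k + a3 * quad_grad Q3 y k)"
    by (simp add: GG_def fun_eq_iff)
  then show ?thesis by (simp add: dot_linl3 dot_grad)
qed

lemma no_plane: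
  assumes X: "A \<in> X" "B \<in> X" "C \<in> X" "D \<in> X" "P \<in> X"
    and ind: "ind2 A B" "ind2 A C" "ind2 A D" "ind2 A P" "ind2 B C" "ind2 B D" "ind2 B P"
      "ind2 C D" "ind2 C P" "ind2 D P"
    and Dc: "\<forall>k<5. D k = d1 * A k + d2 * B k + d3 * C k"
    and Pc: "\<forall>k<5. P k = p1 * A k + p2 * B k + p3 * C k"
  shows False
proof -
  note inds = ind ind[THEN ind2_sym]
  have coef: "e1 \<noteq> 0 \<and> e2 \<noteq> 0 \<and> e3 \<noteq> 0"
    if "E \<in> X" "ind2 A E" "ind2 B E" "ind2 C E" "\<forall>k<5. E k = e1 * A k + e2 * B k + e3 * C k" for E e1 e2 e3
  proof (intro conjI notI)
    assume "e1 = 0"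
    then have "\<forall>k<5. E k = e2 * B k + e3 * C k" using that(5) by simp
    then show False using no_line'[of B C E e2 e3] X that inds by blast
  next
    assume "e2 = 0"
    then have "\<forall>k<5. E k = e1 * A k + e3 * C k" using that(5) by simp
    then show False using no_line'[of A C E e1 e3] X that inds by blast
  next
    assume "e3 = 0"
    then have "\<forall>k<5. E k = e1 * A k + e2 * B k" using that(5) by simp
    then show False using no_line'[of A B E e1 e2] X that inds by blast
  qed
  have dnz: "d1 \<noteq> 0" "d2 \<noteq> 0" "d3 \<noteq> 0" using coef[OF X(4) ind(3,6,8) Dc] by auto
  have pnz: "p1 \<noteq> 0" "p2 \<noteq> 0" "p3 \<noteq> 0" using coef[OF X(5) ind(4,7,9) Pc] by auto
  have w1: "d1 * p2 - d2 * p1 \<noteq> 0"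
  proof
    assume h: "d1 * p2 - d2 * p1 = 0"
    define \<kappa> where "\<kappa> = d1 / p1"
    have "\<kappa> * p1 = d1" "\<kappa> * p2 = d2" using h pnz unfolding \<kappa>_def by (auto simp: field_simps)
    then have "\<forall>k<5. D k = \<kappa> * P k + (d3 - \<kappa> * p3) * C k"
      using Dc Pc recomb by metis
    then show False using no_line'[of P C D] X inds by blast
  qed
  have w2: "d3 * p1 - d1 * p3 \<noteq> 0"
  proof
    assume h: "d3 * p1 - d1 * p3 = 0"
    define \<kappa> where "\<kappa> = d1 / p1"
    have "\<kappa> * p1 = d1" "\<kappa> * p3 = d3" using h pnz unfolding \<kappa>_def by (auto simp: field_simps)
    then have "\<forall>k<5. D k = \<kappa> * P k + (d2 - \<kappa> * p2) * B k"
    proof (intro allI impI)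
      fix k :: nat assume "k < 5"
      assume e: "\<kappa> * p1 = d1" "\<kappa> * p3 = d3"
      have "D k = (\<kappa> * p1) * A k + d2 * B k + (\<kappa> * p3) * C k" using Dc e \<open>k < 5\<close> by simp
      then show "D k = \<kappa> * P k + (d2 - \<kappa> * p2) * B k" using Pc \<open>k < 5\<close> by (simp add: algebra_simps)
    qed
    then show False using no_line'[of P B D] X inds by blast
  qed
  have w3: "d2 * p3 - d3 * p2 \<noteq> 0"
  proof
    assume h: "d2 * p3 - d3 * p2 = 0"
    define \<kappa> where "\<kappa> = d2 / p2"
    have "\<kappa> * p2 = d2" "\<kappa> * p3 = d3" using h pnz unfolding \<kappa>_def by (auto simp: field_simps)
    then have "\<forall>k<5. D k = \<kappa> * P k + (d1 - \<kappa> * p1) * A k"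
    proof (intro allI impI)
      fix k :: nat assume "k < 5"
      assume e: "\<kappa> * p2 = d2" "\<kappa> * p3 = d3"
      have "D k = d1 * A k + (\<kappa> * p2) * B k + (\<kappa> * p3) * C k" using Dc e \<open>k < 5\<close> by simp
      then show "D k = \<kappa> * P k + (d1 - \<kappa> * p1) * A k" using Pc \<open>k < 5\<close> by (simp add: algebra_simps)
    qed
    then show False using no_line'[of P A D] X inds by blast
  qed
  define W1 where "W1 = (d1*d3) * (p2*p3) - (d2*d3) * (p1*p3)"
  define W2 where "W2 = (d2*d3) * (p1*p2) - (d1*d2) * (p2*p3)"
  define W3 where "W3 = (d1*d2) * (p1*p3) - (d1*d3) * (p1*p2)"
  have "W1 = d3 * p3 * (d1 * p2 - d2 * p1)" unfolding W1_def by algebra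
  then have W1nz: "W1 \<noteq> 0" using w1 dnz pnz by simp
  have "W2 = d2 * p2 * (d3 * p1 - d1 * p3)" unfolding W2_def by algebra
  then have W2nz: "W2 \<noteq> 0" using w2 dnz pnz by simp
  have "W3 = d1 * p1 * (d2 * p3 - d3 * p2)" unfolding W3_def by algebra
  then have W3nz: "W3 \<noteq> 0" using w3 dnz pnz by simp
  \<comment> \<open>each quadric restricted to the plane is a multiple of one conic\<close>
  have lam: "\<exists>l. sb Q A B = l * W1 \<and> sb Q A C = l * W2 \<and> sb Q B C = l * W3"
    if "quad Q A = 0" "quad Q B = 0" "quad Q C = 0" "quad Q D = 0" "quad Q P = 0" for Q
  proof -
    have "quad Q D = quad Q (\<lambda>k. d1 * A k + d2 * B k + d3 * C k)" using Dc by (intro quad_cong) auto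
    then have e1: "(d1*d2) * sb Q A B + (d1*d3) * sb Q A C + (d2*d3) * sb Q B C = 0"
      using that by (simp add: quad_lin3)
    have "quad Q P = quad Q (\<lambda>k. p1 * A k + p2 * B k + p3 * C k)" using Pc by (intro quad_cong) auto
    then have e2: "(p1*p2) * sb Q A B + (p1*p3) * sb Q A C + (p2*p3) * sb Q B C = 0"
      using that by (simp add: quad_lin3)
    have "W1 = (d1*d3) * (p2*p3) - (d2*d3) * (p1*p3)" by (simp add: W1_def)
    from cross_line[OF e1 e2] W1nz
    show ?thesis unfolding W1_def W2_def W3_def
      by (intro exI[of _ "sb Q A B / W1"]) (auto simp: W1_def field_simps)
  qed
  obtain l1 where l1: "sb Q1 A B = l1 * W1" "sb Q1 A C = l1 * W2" "sb Q1 B C = l1 * W3"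
    using lam[of Q1] X by (auto simp: memX)
  obtain l2 where l2: "sb Q2 A B = l2 * W1" "sb Q2 A C = l2 * W2" "sb Q2 B C = l2 * W3"
    using lam[of Q2] X by (auto simp: memX)
  obtain l3 where l3: "sb Q3 A B = l3 * W1" "sb Q3 A C = l3 * W2" "sb Q3 B C = l3 * W3"
    using lam[of Q3] X by (auto simp: memX)
  obtain a1 a2 a3 b1 b2 b3 where ab: "a1 * l1 + a2 * l2 + a3 * l3 = 0" "b1 * l1 + b2 * l2 + b3 * l3 = 0"
    and indab: "\<And>e1 e2. e1 * a1 + e2 * b1 = 0 \<Longrightarrow> e1 * a2 + e2 * b2 = 0 \<Longrightarrow> e1 * a3 + e2 * b3 = 0 \<Longrightarrow> e1 = 0 \<and> e2 = 0"
    using two_perp[of l1 l2 l3] by blast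
  have qz: "quad Q1 Y = 0" "quad Q2 Y = 0" "quad Q3 Y = 0" if "Y = A \<or> Y = B \<or> Y = C" for Y
    using that X by (auto simp: memX)
  have csb: "c1 * sb Q1 Y Z + c2 * sb Q2 Y Z + c3 * sb Q3 Y Z = 0"
    if c: "c1 * l1 + c2 * l2 + c3 * l3 = 0" and Y: "Y = A \<or> Y = B \<or> Y = C" and Z: "Z = A \<or> Z = B \<or> Z = C"
    for c1 c2 c3 Y Z
  proof -
    have WW: "c1 * (l1 * W) + c2 * (l2 * W) + c3 * (l3 * W) = 0" for W
    proof -
      have "c1 * (l1 * W) + c2 * (l2 * W) + c3 * (l3 * W) = (c1 * l1 + c2 * l2 + c3 * l3) * W"
        by (simp add: algebra_simps)
      then show ?thesis using c by simp
    qed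
    from Y Z show ?thesis
      by (elim disjE) (simp_all add: sb_self qz l1 l2 l3 WW sb_sym[of _ B A] sb_sym[of _ C A] sb_sym[of _ C B])
  qed
  obtain k1 k2 k3 where kk: "k1 < 5" "k2 < 5" "k3 < 5" "distinct [k1,k2,k3]"
    and M3: "det3 (A k1) (A k2) (A k3) (B k1) (B k2) (B k3) (C k1) (C k2) (C k3) \<noteq> 0"
    using minor3_exists[OF X(1-3) ind(1,2,5)] by blast
  obtain r1 r2 where rr: "distinct [k1,k2,k3,r1,r2]" "r1 < 5" "r2 < 5"
    using compl3[OF kk] by blast
  define u where "u = (\<lambda>s t::'a. W2 * W3 * (s * t) - W2 * W1 * (t * t))"
  define v where "v = (\<lambda>s t::'a. - (W2 * W2) * (s * t))"
  define w where "w = (\<lambda>s t::'a. W2 * W1 * (s * t) - W2 * W3 * (s * s))"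
  have "u = (\<lambda>s t. 0 * (s * s) + (W2 * W3) * (s * t) + (- (W2 * W1)) * (t * t))"
    unfolding u_def by (simp add: fun_eq_iff)
  then have bu: "bform 2 u" by (simp only:) (rule bform_quadform)
  have "v = (\<lambda>s t. 0 * (s * s) + (- (W2 * W2)) * (s * t) + 0 * (t * t))"
    unfolding v_def by (simp add: fun_eq_iff)
  then have bv: "bform 2 v" by (simp only:) (rule bform_quadform)
  have "w = (\<lambda>s t. (- (W2 * W3)) * (s * s) + (W2 * W1) * (s * t) + 0 * (t * t))"
    unfolding w_def by (simp add: fun_eq_iff)
  then have bw: "bform 2 w" by (simp only:) (rule bform_quadform)
  define ent where "ent = (\<lambda>c1 c2 c3 r s t. u s t * GG c1 c2 c3 A r + v s t * GG c1 c2 c3 B r + w s t * GG c1 c2 c3 C r)"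
  define F where "F = (\<lambda>s t. ent a1 a2 a3 r1 s t * ent b1 b2 b3 r2 s t - ent a1 a2 a3 r2 s t * ent b1 b2 b3 r1 s t)"
  have "bform 4 F" unfolding F_def ent_def
    by (intro bform_det2 bform_entry bu bv bw)
  then have "\<exists>s t. (s \<noteq> 0 \<or> t \<noteq> 0) \<and> F s t = 0" by (rule bform_root[OF ac]) simp
  then obtain s t where st: "s \<noteq> 0 \<or> t \<noteq> 0" "F s t = 0" by blast
  define x where "x = (\<lambda>k. u s t * A k + v s t * B k + w s t * C k)"
  have GGx: "GG c1 c2 c3 x r = ent c1 c2 c3 r s t" for c1 c2 c3 r
    unfolding x_def ent_def by (rule GG_lin3)
  have "nonzero5 x"
  proof (rule ccontr)
    assume "\<not> nonzero5 x"
    then have "x k1 = 0" "x k2 = 0" "x k3 = 0" using kk unfolding nonzero5_def by auto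
    then have "u s t = 0 \<and> v s t = 0 \<and> w s t = 0"
      using cramer3T[OF M3, of "u s t" "v s t" "w s t"] unfolding x_def by simp
    then show False using conic_param_nz[OF W1nz W2nz W3nz st(1)] unfolding u_def v_def w_def by simp
  qed
  have conic0: "W1 * (u s t * v s t) + W2 * (u s t * w s t) + W3 * (v s t * w s t) = 0"
    unfolding u_def v_def w_def by (rule conic_param)
  have qx: "quad Q x = 0" if "quad Q A = 0" "quad Q B = 0" "quad Q C = 0"
     "sb Q A B = l * W1" "sb Q A C = l * W2" "sb Q B C = l * W3" for Q l
  proof -
    have "quad Q x = l * (W1 * (u s t * v s t) + W2 * (u s t * w s t) + W3 * (v s t * w s t))"
      unfolding x_def quad_lin3 using that by (simp add: algebra_simps)
    then show ?thesis using conic0 by simp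
  qed
  have xX: "x \<in> X" unfolding memX using \<open>nonzero5 x\<close> qx[OF qz(1)[of A] qz(1)[of B] qz(1)[of C] l1]
      qx[OF qz(2)[of A] qz(2)[of B] qz(2)[of C] l2] qx[OF qz(3)[of A] qz(3)[of B] qz(3)[of C] l3] by simp
  obtain e1 e2 where e: "e1 \<noteq> 0 \<or> e2 \<noteq> 0"
    "e1 * GG a1 a2 a3 x r1 + e2 * GG b1 b2 b3 x r1 = 0" "e1 * GG a1 a2 a3 x r2 + e2 * GG b1 b2 b3 x r2 = 0"
    using null2[of "GG a1 a2 a3 x r1" "GG b1 b2 b3 x r2" "GG a1 a2 a3 x r2" "GG b1 b2 b3 x r1"] st(2)
    unfolding GGx F_def by blast
  define H where "H = (\<lambda>k. e1 * GG a1 a2 a3 x k + e2 * GG b1 b2 b3 x k)"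
  have dGGx: "dot (GG c1 c2 c3 x) Y = 0" if "c1 * l1 + c2 * l2 + c3 * l3 = 0" "Y = A \<or> Y = B \<or> Y = C" for c1 c2 c3 Y
  proof -
    have "dot (GG c1 c2 c3 x) Y = u s t * (c1 * sb Q1 A Y + c2 * sb Q2 A Y + c3 * sb Q3 A Y)
       + v s t * (c1 * sb Q1 B Y + c2 * sb Q2 B Y + c3 * sb Q3 B Y) + w s t * (c1 * sb Q1 C Y + c2 * sb Q2 C Y + c3 * sb Q3 C Y)"
      unfolding dot_GG x_def sb_lin1_3 by (simp add: algebra_simps)
    then show ?thesis using csb[OF that(1) _ that(2)] by simp
  qed
  have dH: "dot H Y = 0" if "Y = A \<or> Y = B \<or> Y = C" for Y
    unfolding H_def dot_linl2 using dGGx[OF ab(1) that] dGGx[OF ab(2) that] by simp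
  have Hr: "H r1 = 0" "H r2 = 0" using e unfolding H_def by auto
  have dH5: "dot H Y = H k1 * Y k1 + H k2 * Y k2 + H k3 * Y k3 + H r1 * Y r1 + H r2 * Y r2" for Y
    unfolding dot_def by (rule sum5_3[OF rr(1) kk(1-3) rr(2-3)])
  have eq: "H k1 * Y k1 + H k2 * Y k2 + H k3 * Y k3 = 0" if "Y = A \<or> Y = B \<or> Y = C" for Y
    using dH[OF that] dH5[of Y] Hr by simp
  have Hk: "H k1 = 0 \<and> H k2 = 0 \<and> H k3 = 0"
    using cramer3[OF M3 eq eq eq] by simp
  have "H k = 0" if "k < 5" for k
    using set5[OF rr(1) kk(1-3) rr(2-3) that] Hk Hr by auto
  moreover have "H k = (e1 * a1 + e2 * b1) * quad_grad Q1 x k + (e1 * a2 + e2 * b2) * quad_grad Q2 x k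
      + (e1 * a3 + e2 * b3) * quad_grad Q3 x k" for k
    unfolding H_def GG_def by (simp add: algebra_simps)
  moreover have "e1 * a1 + e2 * b1 \<noteq> 0 \<or> e1 * a2 + e2 * b2 \<noteq> 0 \<or> e1 * a3 + e2 * b3 \<noteq> 0"
    using indab e(1) by blast
  ultimately show False using smooth_contra[OF xX] by metis
qed

end

lemma comb6:
  fixes bad :: "nat set \<Rightarrow> bool"
  assumes H: "\<And>x y z w. distinct [x,y,z,w] \<Longrightarrow> x < 6 \<Longrightarrow> y < 6 \<Longrightarrow> z < 6 \<Longrightarrow> w < 6 \<Longrightarrow> \<not> (bad {x,y,z} \<and> bad {x,y,w})"
  shows "\<exists>T. T \<subseteq> {..<6} \<and> \<not> bad T \<and> \<not> bad ({..<6} - T)"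
proof (rule ccontr)
  assume N: "\<not> ?thesis"
  have "{..<6::nat} - {0,1,2} = {3,4,5}" by auto
  moreover have "{0,1,2} \<subseteq> {..<6::nat}" by auto
  ultimately have p0: "bad {0,1,2} \<or> bad {3,4,5}" using N by (metis (no_types, lifting))
  have "{..<6::nat} - {0,1,3} = {2,4,5}" by auto
  moreover have "{0,1,3} \<subseteq> {..<6::nat}" by auto
  ultimately have p1: "bad {0,1,3} \<or> bad {2,4,5}" using N by (metis (no_types, lifting))
  have "{..<6::nat} - {0,1,4} = {2,3,5}" by auto
  moreover have "{0,1,4} \<subseteq> {..<6::nat}" by auto
  ultimately have p2: "bad {0,1,4} \<or> bad {2,3,5}" using N by (metis (no_types, lifting))
  have "{..<6::nat} - {0,1,5} = {2,3,4}" by auto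
  moreover have "{0,1,5} \<subseteq> {..<6::nat}" by auto
  ultimately have p3: "bad {0,1,5} \<or> bad {2,3,4}" using N by (metis (no_types, lifting))
  have "{..<6::nat} - {0,2,3} = {1,4,5}" by auto
  moreover have "{0,2,3} \<subseteq> {..<6::nat}" by auto
  ultimately have p4: "bad {0,2,3} \<or> bad {1,4,5}" using N by (metis (no_types, lifting))
  have "{..<6::nat} - {0,2,4} = {1,3,5}" by auto
  moreover have "{0,2,4} \<subseteq> {..<6::nat}" by auto
  ultimately have p5: "bad {0,2,4} \<or> bad {1,3,5}" using N by (metis (no_types, lifting))
  have "{..<6::nat} - {0,2,5} = {1,3,4}" by auto
  moreover have "{0,2,5} \<subseteq> {..<6::nat}" by auto
  ultimately have p6: "bad {0,2,5} \<or> bad {1,3,4}" using N by (metis (no_types, lifting))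
  have "{..<6::nat} - {0,3,4} = {1,2,5}" by auto
  moreover have "{0,3,4} \<subseteq> {..<6::nat}" by auto
  ultimately have p7: "bad {0,3,4} \<or> bad {1,2,5}" using N by (metis (no_types, lifting))
  have "{..<6::nat} - {0,3,5} = {1,2,4}" by auto
  moreover have "{0,3,5} \<subseteq> {..<6::nat}" by auto
  ultimately have p8: "bad {0,3,5} \<or> bad {1,2,4}" using N by (metis (no_types, lifting))
  have "{..<6::nat} - {0,4,5} = {1,2,3}" by auto
  moreover have "{0,4,5} \<subseteq> {..<6::nat}" by auto
  ultimately have p9: "bad {0,4,5} \<or> bad {1,2,3}" using N by (metis (no_types, lifting))
  have c0: "\<not> (bad {0,1,2} \<and> bad {0,1,3})" using H[of 0 1 2 3] by (simp add: insert_commute)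
  have c1: "\<not> (bad {0,1,2} \<and> bad {0,1,4})" using H[of 0 1 2 4] by (simp add: insert_commute)
  have c2: "\<not> (bad {0,1,2} \<and> bad {0,1,5})" using H[of 0 1 2 5] by (simp add: insert_commute)
  have c3: "\<not> (bad {0,1,2} \<and> bad {0,2,3})" using H[of 0 2 1 3] by (simp add: insert_commute)
  have c4: "\<not> (bad {0,1,2} \<and> bad {0,2,4})" using H[of 0 2 1 4] by (simp add: insert_commute)
  have c5: "\<not> (bad {0,1,2} \<and> bad {0,2,5})" using H[of 0 2 1 5] by (simp add: insert_commute)
  have c6: "\<not> (bad {0,1,2} \<and> bad {1,2,3})" using H[of 1 2 0 3] by (simp add: insert_commute)
  have c7: "\<not> (bad {0,1,2} \<and> bad {1,2,4})" using H[of 1 2 0 4] by (simp add: insert_commute)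
  have c8: "\<not> (bad {0,1,2} \<and> bad {1,2,5})" using H[of 1 2 0 5] by (simp add: insert_commute)
  have c9: "\<not> (bad {0,1,3} \<and> bad {0,1,4})" using H[of 0 1 3 4] by (simp add: insert_commute)
  have c10: "\<not> (bad {0,1,3} \<and> bad {0,1,5})" using H[of 0 1 3 5] by (simp add: insert_commute)
  have c11: "\<not> (bad {0,1,3} \<and> bad {0,2,3})" using H[of 0 3 1 2] by (simp add: insert_commute)
  have c12: "\<not> (bad {0,1,3} \<and> bad {0,3,4})" using H[of 0 3 1 4] by (simp add: insert_commute)
  have c13: "\<not> (bad {0,1,3} \<and> bad {0,3,5})" using H[of 0 3 1 5] by (simp add: insert_commute)
  have c14: "\<not> (bad {0,1,3} \<and> bad {1,2,3})" using H[of 1 3 0 2] by (simp add: insert_commute)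
  have c15: "\<not> (bad {0,1,3} \<and> bad {1,3,4})" using H[of 1 3 0 4] by (simp add: insert_commute)
  have c16: "\<not> (bad {0,1,3} \<and> bad {1,3,5})" using H[of 1 3 0 5] by (simp add: insert_commute)
  have c17: "\<not> (bad {0,1,4} \<and> bad {0,1,5})" using H[of 0 1 4 5] by (simp add: insert_commute)
  have c18: "\<not> (bad {0,1,4} \<and> bad {0,2,4})" using H[of 0 4 1 2] by (simp add: insert_commute)
  have c19: "\<not> (bad {0,1,4} \<and> bad {0,3,4})" using H[of 0 4 1 3] by (simp add: insert_commute)
  have c20: "\<not> (bad {0,1,4} \<and> bad {0,4,5})" using H[of 0 4 1 5] by (simp add: insert_commute)
  have c21: "\<not> (bad {0,1,4} \<and> bad {1,2,4})" using H[of 1 4 0 2] by (simp add: insert_commute)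
  have c22: "\<not> (bad {0,1,4} \<and> bad {1,3,4})" using H[of 1 4 0 3] by (simp add: insert_commute)
  have c23: "\<not> (bad {0,1,4} \<and> bad {1,4,5})" using H[of 1 4 0 5] by (simp add: insert_commute)
  have c24: "\<not> (bad {0,1,5} \<and> bad {0,2,5})" using H[of 0 5 1 2] by (simp add: insert_commute)
  have c25: "\<not> (bad {0,1,5} \<and> bad {0,3,5})" using H[of 0 5 1 3] by (simp add: insert_commute)
  have c26: "\<not> (bad {0,1,5} \<and> bad {0,4,5})" using H[of 0 5 1 4] by (simp add: insert_commute)
  have c27: "\<not> (bad {0,1,5} \<and> bad {1,2,5})" using H[of 1 5 0 2] by (simp add: insert_commute)
  have c28: "\<not> (bad {0,1,5} \<and> bad {1,3,5})" using H[of 1 5 0 3] by (simp add: insert_commute)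
  have c29: "\<not> (bad {0,1,5} \<and> bad {1,4,5})" using H[of 1 5 0 4] by (simp add: insert_commute)
  have c30: "\<not> (bad {0,2,3} \<and> bad {0,2,4})" using H[of 0 2 3 4] by (simp add: insert_commute)
  have c31: "\<not> (bad {0,2,3} \<and> bad {0,2,5})" using H[of 0 2 3 5] by (simp add: insert_commute)
  have c32: "\<not> (bad {0,2,3} \<and> bad {0,3,4})" using H[of 0 3 2 4] by (simp add: insert_commute)
  have c33: "\<not> (bad {0,2,3} \<and> bad {0,3,5})" using H[of 0 3 2 5] by (simp add: insert_commute)
  have c34: "\<not> (bad {0,2,3} \<and> bad {1,2,3})" using H[of 2 3 0 1] by (simp add: insert_commute)
  have c35: "\<not> (bad {0,2,3} \<and> bad {2,3,4})" using H[of 2 3 0 4] by (simp add: insert_commute)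
  have c36: "\<not> (bad {0,2,3} \<and> bad {2,3,5})" using H[of 2 3 0 5] by (simp add: insert_commute)
  have c37: "\<not> (bad {0,2,4} \<and> bad {0,2,5})" using H[of 0 2 4 5] by (simp add: insert_commute)
  have c38: "\<not> (bad {0,2,4} \<and> bad {0,3,4})" using H[of 0 4 2 3] by (simp add: insert_commute)
  have c39: "\<not> (bad {0,2,4} \<and> bad {0,4,5})" using H[of 0 4 2 5] by (simp add: insert_commute)
  have c40: "\<not> (bad {0,2,4} \<and> bad {1,2,4})" using H[of 2 4 0 1] by (simp add: insert_commute)
  have c41: "\<not> (bad {0,2,4} \<and> bad {2,3,4})" using H[of 2 4 0 3] by (simp add: insert_commute)
  have c42: "\<not> (bad {0,2,4} \<and> bad {2,4,5})" using H[of 2 4 0 5] by (simp add: insert_commute)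
  have c43: "\<not> (bad {0,2,5} \<and> bad {0,3,5})" using H[of 0 5 2 3] by (simp add: insert_commute)
  have c44: "\<not> (bad {0,2,5} \<and> bad {0,4,5})" using H[of 0 5 2 4] by (simp add: insert_commute)
  have c45: "\<not> (bad {0,2,5} \<and> bad {1,2,5})" using H[of 2 5 0 1] by (simp add: insert_commute)
  have c46: "\<not> (bad {0,2,5} \<and> bad {2,3,5})" using H[of 2 5 0 3] by (simp add: insert_commute)
  have c47: "\<not> (bad {0,2,5} \<and> bad {2,4,5})" using H[of 2 5 0 4] by (simp add: insert_commute)
  have c48: "\<not> (bad {0,3,4} \<and> bad {0,3,5})" using H[of 0 3 4 5] by (simp add: insert_commute)
  have c49: "\<not> (bad {0,3,4} \<and> bad {0,4,5})" using H[of 0 4 3 5] by (simp add: insert_commute)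
  have c50: "\<not> (bad {0,3,4} \<and> bad {1,3,4})" using H[of 3 4 0 1] by (simp add: insert_commute)
  have c51: "\<not> (bad {0,3,4} \<and> bad {2,3,4})" using H[of 3 4 0 2] by (simp add: insert_commute)
  have c52: "\<not> (bad {0,3,4} \<and> bad {3,4,5})" using H[of 3 4 0 5] by (simp add: insert_commute)
  have c53: "\<not> (bad {0,3,5} \<and> bad {0,4,5})" using H[of 0 5 3 4] by (simp add: insert_commute)
  have c54: "\<not> (bad {0,3,5} \<and> bad {1,3,5})" using H[of 3 5 0 1] by (simp add: insert_commute)
  have c55: "\<not> (bad {0,3,5} \<and> bad {2,3,5})" using H[of 3 5 0 2] by (simp add: insert_commute)
  have c56: "\<not> (bad {0,3,5} \<and> bad {3,4,5})" using H[of 3 5 0 4] by (simp add: insert_commute)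
  have c57: "\<not> (bad {0,4,5} \<and> bad {1,4,5})" using H[of 4 5 0 1] by (simp add: insert_commute)
  have c58: "\<not> (bad {0,4,5} \<and> bad {2,4,5})" using H[of 4 5 0 2] by (simp add: insert_commute)
  have c59: "\<not> (bad {0,4,5} \<and> bad {3,4,5})" using H[of 4 5 0 3] by (simp add: insert_commute)
  have c60: "\<not> (bad {1,2,3} \<and> bad {1,2,4})" using H[of 1 2 3 4] by (simp add: insert_commute)
  have c61: "\<not> (bad {1,2,3} \<and> bad {1,2,5})" using H[of 1 2 3 5] by (simp add: insert_commute)
  have c62: "\<not> (bad {1,2,3} \<and> bad {1,3,4})" using H[of 1 3 2 4] by (simp add: insert_commute)
  have c63: "\<not> (bad {1,2,3} \<and> bad {1,3,5})" using H[of 1 3 2 5] by (simp add: insert_commute)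
  have c64: "\<not> (bad {1,2,3} \<and> bad {2,3,4})" using H[of 2 3 1 4] by (simp add: insert_commute)
  have c65: "\<not> (bad {1,2,3} \<and> bad {2,3,5})" using H[of 2 3 1 5] by (simp add: insert_commute)
  have c66: "\<not> (bad {1,2,4} \<and> bad {1,2,5})" using H[of 1 2 4 5] by (simp add: insert_commute)
  have c67: "\<not> (bad {1,2,4} \<and> bad {1,3,4})" using H[of 1 4 2 3] by (simp add: insert_commute)
  have c68: "\<not> (bad {1,2,4} \<and> bad {1,4,5})" using H[of 1 4 2 5] by (simp add: insert_commute)
  have c69: "\<not> (bad {1,2,4} \<and> bad {2,3,4})" using H[of 2 4 1 3] by (simp add: insert_commute)
  have c70: "\<not> (bad {1,2,4} \<and> bad {2,4,5})" using H[of 2 4 1 5] by (simp add: insert_commute)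
  have c71: "\<not> (bad {1,2,5} \<and> bad {1,3,5})" using H[of 1 5 2 3] by (simp add: insert_commute)
  have c72: "\<not> (bad {1,2,5} \<and> bad {1,4,5})" using H[of 1 5 2 4] by (simp add: insert_commute)
  have c73: "\<not> (bad {1,2,5} \<and> bad {2,3,5})" using H[of 2 5 1 3] by (simp add: insert_commute)
  have c74: "\<not> (bad {1,2,5} \<and> bad {2,4,5})" using H[of 2 5 1 4] by (simp add: insert_commute)
  have c75: "\<not> (bad {1,3,4} \<and> bad {1,3,5})" using H[of 1 3 4 5] by (simp add: insert_commute)
  have c76: "\<not> (bad {1,3,4} \<and> bad {1,4,5})" using H[of 1 4 3 5] by (simp add: insert_commute)
  have c77: "\<not> (bad {1,3,4} \<and> bad {2,3,4})" using H[of 3 4 1 2] by (simp add: insert_commute)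
  have c78: "\<not> (bad {1,3,4} \<and> bad {3,4,5})" using H[of 3 4 1 5] by (simp add: insert_commute)
  have c79: "\<not> (bad {1,3,5} \<and> bad {1,4,5})" using H[of 1 5 3 4] by (simp add: insert_commute)
  have c80: "\<not> (bad {1,3,5} \<and> bad {2,3,5})" using H[of 3 5 1 2] by (simp add: insert_commute)
  have c81: "\<not> (bad {1,3,5} \<and> bad {3,4,5})" using H[of 3 5 1 4] by (simp add: insert_commute)
  have c82: "\<not> (bad {1,4,5} \<and> bad {2,4,5})" using H[of 4 5 1 2] by (simp add: insert_commute)
  have c83: "\<not> (bad {1,4,5} \<and> bad {3,4,5})" using H[of 4 5 1 3] by (simp add: insert_commute)
  have c84: "\<not> (bad {2,3,4} \<and> bad {2,3,5})" using H[of 2 3 4 5] by (simp add: insert_commute)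
  have c85: "\<not> (bad {2,3,4} \<and> bad {2,4,5})" using H[of 2 4 3 5] by (simp add: insert_commute)
  have c86: "\<not> (bad {2,3,4} \<and> bad {3,4,5})" using H[of 3 4 2 5] by (simp add: insert_commute)
  have c87: "\<not> (bad {2,3,5} \<and> bad {2,4,5})" using H[of 2 5 3 4] by (simp add: insert_commute)
  have c88: "\<not> (bad {2,3,5} \<and> bad {3,4,5})" using H[of 3 5 2 4] by (simp add: insert_commute)
  have c89: "\<not> (bad {2,4,5} \<and> bad {3,4,5})" using H[of 4 5 2 3] by (simp add: insert_commute)
  show False using p0 p1 p2 p3 p4 p5 p6 p7 p8 p9 c0 c1 c2 c3 c4 c5 c6 c7 c8 c9 c10 c11 c12 c13 c14 c15 c16 c17 c18 c19 c20 c21 c22 c23 c24 c25 c26 c27 c28 c29 c30 c31 c32 c33 c34 c35 c36 c37 c38 c39 c40 c41 c42 c43 c44 c45 c46 c47 c48 c49 c50 c51 c52 c53 c54 c55 c56 c57 c58 c59 c60 c61 c62 c63 c64 c65 c66 c67 c68 c69 c70 c71 c72 c73 c74 c75 c76 c77 c78 c79 c80 c81 c82 c83 c84 c85 c86 c87 c88 c89 by sat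
qed


lemma card_le2_cases:
  assumes "finite I" "card I \<le> 2"
  shows "I = {} \<or> (\<exists>a. I = {a}) \<or> (\<exists>a b. a \<noteq> b \<and> I = {a,b})"
proof -
  have "card I = 0 \<or> card I = 1 \<or> card I = 2" using assms(2) by auto
  then show ?thesis using assms(1) by (auto simp: card_1_singleton_iff card_2_iff)
qed

lemma quad_prod: "quad (\<lambda>i k. l i * m k) x = dot l x * dot m x"
  by (simp add: quad_def dot_def sum_product algebra_simps)

context curve5
begin

definition sepI :: "(nat \<Rightarrow> nat \<Rightarrow> 'a) \<Rightarrow> nat \<Rightarrow> nat set \<Rightarrow> bool" where
  "sepI p j I \<longleftrightarrow> (\<exists>l. (\<forall>i\<in>I. dot l (p i) = 0) \<and> dot l (p j) \<noteq> 0)"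

lemma sep_small:
  assumes pX: "\<forall>i<n. p i \<in> X" and pd: "\<forall>i<n. \<forall>i'<n. i \<noteq> i' \<longrightarrow> \<not> proj_eq (p i) (p i')"
    and j: "j < n" and I: "I \<subseteq> {..<n} - {j}" "card I \<le> 2"
  shows "sepI p j I"
proof -
  have fin: "finite I" using I(1) finite_subset by blast
  have ind: "ind2 (p a) (p b)" if "a < n" "b < n" "a \<noteq> b" for a b
    using pd that unfolding ind2_def by auto
  from duality[OF fin, of p "p j"] show ?thesis
  proof
    assume "\<exists>l. (\<forall>i\<in>I. dot l (p i) = 0) \<and> dot l (p j) \<noteq> 0"
    then show ?thesis by (simp add: sepI_def)
  next
    assume "\<exists>c. \<forall>k<5. p j k = (\<Sum>i\<in>I. c i * p i k)"
    then obtain c where c: "\<forall>k<5. p j k = (\<Sum>i\<in>I. c i * p i k)" by blast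
    from card_le2_cases[OF fin I(2)] show ?thesis
    proof (elim disjE exE conjE)
      assume "I = {}"
      then have "\<not> nonzero5 (p j)" using c by (simp add: nonzero5_def)
      then show ?thesis using pX j by (auto simp: memX)
    next
      fix a assume "I = {a}"
      then have "\<forall>k<5. p j k = c a * p a k" using c by simp
      then have "proj_eq (p j) (p a)" unfolding proj_eq_def by blast
      moreover have "a < n" "a \<noteq> j" using I(1) \<open>I = {a}\<close> by auto
      ultimately show ?thesis using pd j by blast
    next
      fix a b assume ab: "a \<noteq> b" "I = {a,b}"
      then have "\<forall>k<5. p j k = c a * p a k + c b * p b k" using c by simp
      moreover have "a < n" "b < n" "a \<noteq> j" "b \<noteq> j" using I(1) ab by auto
      ultimately show ?thesis using no_line'[of "p a" "p b" "p j" "c a" "c b"] pX ind j ab(1) by blast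
    qed
  qed
qed

lemma bad_pair:
  assumes pX: "\<forall>i<n. p i \<in> X" and pd: "\<forall>i<n. \<forall>i'<n. i \<noteq> i' \<longrightarrow> \<not> proj_eq (p i) (p i')"
    and j: "j < n" and abcd: "distinct [a,b,c,d,j]" "a < n" "b < n" "c < n" "d < n"
    and b1: "\<not> sepI p j {a,b,c}" and b2: "\<not> sepI p j {a,b,d}"
  shows False
proof -
  have ind: "ind2 (p x) (p y)" if "x < n" "y < n" "x \<noteq> y" for x y
    using pd that unfolding ind2_def by auto
  obtain e where e: "\<forall>k<5. p j k = (\<Sum>i\<in>{a,b,c}. e i * p i k)"
    using duality[of "{a,b,c}" p "p j"] b1 unfolding sepI_def by auto
  obtain f where f: "\<forall>k<5. p j k = (\<Sum>i\<in>{a,b,d}. f i * p i k)"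
    using duality[of "{a,b,d}" p "p j"] b2 unfolding sepI_def by auto
  have e': "\<forall>k<5. p j k = e a * p a k + e b * p b k + e c * p c k" using e abcd(1) by (simp add: algebra_simps)
  have f': "\<forall>k<5. p j k = f a * p a k + f b * p b k + f d * p d k" using f abcd(1) by (simp add: algebra_simps)
  have "f d \<noteq> 0"
  proof
    assume "f d = 0"
    then have "\<forall>k<5. p j k = f a * p a k + f b * p b k" using f' by simp
    then show False using no_line'[of "p a" "p b" "p j"] pX ind abcd j by auto
  qed
  have Dc: "\<forall>k<5. p d k = ((e a - f a) / f d) * p a k + ((e b - f b) / f d) * p b k + (e c / f d) * p c k"
  proof (intro allI impI)
    fix k :: nat assume k: "k < 5"
    have h: "f d * p d k = (e a - f a) * p a k + (e b - f b) * p b k + e c * p c k"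
      using e'[rule_format, OF k] f'[rule_format, OF k] by (simp add: algebra_simps)
    have "f d * (((e a - f a) / f d) * p a k + ((e b - f b) / f d) * p b k + (e c / f d) * p c k)
        = (e a - f a) * p a k + (e b - f b) * p b k + e c * p c k"
      using \<open>f d \<noteq> 0\<close> by (simp add: distrib_left)
    then show "p d k = ((e a - f a) / f d) * p a k + ((e b - f b) / f d) * p b k + (e c / f d) * p c k"
      using h \<open>f d \<noteq> 0\<close> by (metis mult_left_cancel)
  qed
  have XX: "p a \<in> X" "p b \<in> X" "p c \<in> X" "p d \<in> X" "p j \<in> X" using pX abcd j by auto
  have dd: "a \<noteq> b" "a \<noteq> c" "a \<noteq> d" "a \<noteq> j" "b \<noteq> c" "b \<noteq> d" "b \<noteq> j" "c \<noteq> d" "c \<noteq> j" "d \<noteq> j"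
    using abcd(1) by auto
  note nn = abcd(2-5) j
  show False
    by (rule no_plane[OF XX ind[OF nn(1) nn(2) dd(1)] ind[OF nn(1) nn(3) dd(2)] ind[OF nn(1) nn(4) dd(3)]
      ind[OF nn(1) nn(5) dd(4)] ind[OF nn(2) nn(3) dd(5)] ind[OF nn(2) nn(4) dd(6)] ind[OF nn(2) nn(5) dd(7)]
      ind[OF nn(3) nn(4) dd(8)] ind[OF nn(3) nn(5) dd(9)] ind[OF nn(4) nn(5) dd(10)] Dc e'])
qed

end


lemma quad_sum: "quad (\<lambda>a b. \<Sum>j\<in>J. f j * M j a b) x = (\<Sum>j\<in>J. f j * quad (M j) x)"
proof -
  have "quad (\<lambda>a b. \<Sum>j\<in>J. f j * M j a b) x = (\<Sum>a<5. \<Sum>b<5. \<Sum>j\<in>J. f j * (M j a b * x a * x b))"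
    unfolding quad_def by (simp add: sum_distrib_right mult.assoc)
  also have "\<dots> = (\<Sum>a<5. \<Sum>j\<in>J. \<Sum>b<5. f j * (M j a b * x a * x b))"
    by (rule sum.cong[OF refl], rule sum.swap)
  also have "\<dots> = (\<Sum>j\<in>J. \<Sum>a<5. \<Sum>b<5. f j * (M j a b * x a * x b))"
    by (rule sum.swap)
  also have "\<dots> = (\<Sum>j\<in>J. f j * quad (M j) x)"
    unfolding quad_def by (simp add: sum_distrib_left mult.assoc)
  finally show ?thesis .
qed

lemma card_sub2: "S \<subseteq> {a, b} \<Longrightarrow> card S \<le> 2"
proof -
  assume "S \<subseteq> {a, b}"
  then have "card S \<le> card {a, b}" by (intro card_mono) auto
  also have "\<dots> \<le> 2" by (cases "a = b") auto
  finally show ?thesis .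
qed

context curve5
begin

lemma sep_quadric:
  fixes p :: "nat \<Rightarrow> nat \<Rightarrow> 'a" and n j :: nat
  assumes pX: "\<forall>i<n. p i \<in> X" and pd: "\<forall>i<n. \<forall>i'<n. i \<noteq> i' \<longrightarrow> \<not> proj_eq (p i) (p i')"
    and n7: "n \<le> 7" and j: "j < n"
  shows "\<exists>M. quad M (p j) \<noteq> 0 \<and> (\<forall>i<n. i \<noteq> j \<longrightarrow> quad M (p i) = 0)"
proof -
  define \<sigma> where "\<sigma> = (\<lambda>s::nat. if s < j then s else Suc s)"
  have \<sigma>j: "\<sigma> s \<noteq> j" for s unfolding \<sigma>_def by auto
  have \<sigma>inj: "\<sigma> s = \<sigma> s' \<longleftrightarrow> s = s'" for s s' unfolding \<sigma>_def by auto
  define bad where "bad = (\<lambda>T. \<not> sepI p j (\<sigma> ` T \<inter> {..<n}))"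
  have sub: "\<sigma> ` T \<inter> {..<n} \<subseteq> {..<n} - {j}" for T using \<sigma>j by auto
  have small: "\<not> bad {x,y,z}" if "\<not> (\<sigma> x < n \<and> \<sigma> y < n \<and> \<sigma> z < n)" for x y z
  proof -
    have "\<sigma> ` {x,y,z} \<inter> {..<n} \<subseteq> {\<sigma> y, \<sigma> z} \<or> \<sigma> ` {x,y,z} \<inter> {..<n} \<subseteq> {\<sigma> x, \<sigma> z}
       \<or> \<sigma> ` {x,y,z} \<inter> {..<n} \<subseteq> {\<sigma> x, \<sigma> y}" using that by auto
    then have "card (\<sigma> ` {x,y,z} \<inter> {..<n}) \<le> 2"
      apply (elim disjE) apply (erule card_sub2)+ done
    then show ?thesis unfolding bad_def using sep_small[OF pX pd j sub] by blast
  qed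
  have H: "\<not> (bad {x,y,z} \<and> bad {x,y,w})"
    if "distinct [x,y,z,w]" "x < 6" "y < 6" "z < 6" "w < 6" for x y z w
  proof (cases "\<sigma> x < n \<and> \<sigma> y < n \<and> \<sigma> z < n \<and> \<sigma> w < n")
    case True
    then have "\<sigma> ` {x,y,z} \<inter> {..<n} = {\<sigma> x, \<sigma> y, \<sigma> z}" "\<sigma> ` {x,y,w} \<inter> {..<n} = {\<sigma> x, \<sigma> y, \<sigma> w}"
      by auto
    moreover have "distinct [\<sigma> x, \<sigma> y, \<sigma> z, \<sigma> w, j]" using that(1) \<sigma>inj \<sigma>j by auto
    ultimately show ?thesis unfolding bad_def using bad_pair[OF pX pd j] True by metis
  next
    case False
    then show ?thesis using small[of x y z] small[of x y w] by blast
  qed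
  obtain T where T: "T \<subseteq> {..<6}" "\<not> bad T" "\<not> bad ({..<6} - T)"
    using comb6[of bad] H by blast
  obtain l where l: "\<forall>i\<in>\<sigma> ` T \<inter> {..<n}. dot l (p i) = 0" "dot l (p j) \<noteq> 0"
    using T(2) unfolding bad_def sepI_def by blast
  obtain m where m: "\<forall>i\<in>\<sigma> ` ({..<6} - T) \<inter> {..<n}. dot m (p i) = 0" "dot m (p j) \<noteq> 0"
    using T(3) unfolding bad_def sepI_def by blast
  have "quad (\<lambda>a b. l a * m b) (p i) = 0" if "i < n" "i \<noteq> j" for i
  proof -
    define s where "s = (if i < j then i else i - 1)"
    have "s < 6" "\<sigma> s = i" using that n7 j unfolding s_def \<sigma>_def by auto
    then have "i \<in> \<sigma> ` T \<inter> {..<n} \<or> i \<in> \<sigma> ` ({..<6} - T) \<inter> {..<n}" using that(1) by blast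
    then have "dot l (p i) = 0 \<or> dot m (p i) = 0" using l(1) m(1) by blast
    then show ?thesis by (auto simp: quad_prod)
  qed
  moreover have "quad (\<lambda>a b. l a * m b) (p j) \<noteq> 0" using l(2) m(2) by (simp add: quad_prod)
  ultimately show ?thesis by blast
qed

end

theorem corollary2p1:
  fixes Q1 Q2 Q3 :: "nat \<Rightarrow> nat \<Rightarrow> 'a::field"
    and p :: "nat \<Rightarrow> nat \<Rightarrow> 'a"
    and n :: nat
  assumes "alg_closed_field TYPE('a)"
    and "char_not_2_3_5 TYPE('a)"
    and "smooth_ci_curve Q1 Q2 Q3"
    and "n \<le> 7"
    and "\<forall>i<n. p i \<in> cone3 Q1 Q2 Q3"
    and "\<forall>i<n. \<forall>j<n. i \<noteq> j \<longrightarrow> \<not> proj_eq (p i) (p j)"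
  shows "indep_on_quadrics n p"
proof -
  interpret curve5 Q1 Q2 Q3 using assms(1,3) by unfold_locales
  have "\<forall>j. \<exists>M. j < n \<longrightarrow> quad M (p j) \<noteq> 0 \<and> (\<forall>i<n. i \<noteq> j \<longrightarrow> quad M (p i) = 0)"
    using sep_quadric[OF assms(5,6,4)] by blast
  then obtain M where M: "\<And>j. j < n \<Longrightarrow> quad (M j) (p j) \<noteq> 0 \<and> (\<forall>i<n. i \<noteq> j \<longrightarrow> quad (M j) (p i) = 0)"
    by metis
  show ?thesis unfolding indep_on_quadrics_def
  proof
    fix c :: "nat \<Rightarrow> 'a"
    define A where "A = (\<lambda>a b. \<Sum>j<n. (c j / quad (M j) (p j)) * M j a b)"
    have "quad A (p i) = c i" if "i < n" for i
    proof -
      have "quad A (p i) = (\<Sum>j<n. (c j / quad (M j) (p j)) * quad (M j) (p i))"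
        unfolding A_def by (rule quad_sum)
      also have "\<dots> = (c i / quad (M i) (p i)) * quad (M i) (p i)
          + (\<Sum>j\<in>{..<n} - {i}. (c j / quad (M j) (p j)) * quad (M j) (p i))"
        by (rule sum.remove) (use that in auto)
      also have "(\<Sum>j\<in>{..<n} - {i}. (c j / quad (M j) (p j)) * quad (M j) (p i)) = 0"
        by (rule sum.neutral) (use that M in auto)
      also have "(c i / quad (M i) (p i)) * quad (M i) (p i) + 0 = c i" using M[OF that] by simp
      finally show ?thesis .
    qed
    then show "\<exists>A. \<forall>i<n. quad A (p i) = c i" by blast
  qed
qed

end
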